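(* Let $E\subset\mathbb R^{n+1}$ be a bounded $C^2$-regular set, $\varepsilon>0$, and let $(x,y)\in\partial E\times\partial E$ be a local maximum or local minimum point of $S_{E,\varepsilon}$. Then $$B_E(x)(x-y)=2S_{E,\varepsilon}(x,y)P_{\partial E}(x)(x-y)\quad\text{and}\quad P_{\partial E}(y)\nu_E(x)=2S_{E,\varepsilon}(x,y)P_{\partial E}(y)(x-y).$$ Moreover, if $r_E>\sqrt\varepsilon$, then $$\nu_E(y)=\frac{\nu_E(x)-2S_{E,\varepsilon}(x,y)(x-y)}{\big(\nu_E(x)-2S_{E,\varepsilon}(x,y)(x-y)\big)\cdot\nu_E(y)}.$$
   Context: $\nu_E$ is the outer unit normal of $E$, $P_{\partial E}=I-\nu_E\otimes\nu_E$, and $B_E=\nabla_\tau\nu_E$ is the second fundamental form as a matrix field on $\partial E$. $S_{E,\varepsilon}(x,y)=\frac{(x-y)\cdot\nu_E(x)}{|x-y|^2+\varepsilon}$ for $(x,y)\in\partial E\times\partial E$. $r_E=\sup\{r>0:d_E\text{ is differentiable in }\{x:\mathrm{dist}(x,\partial E)<r\}\}$, $d_E$ the signed distance function of $E$. *)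

theory Defs
  imports "HOL-Analysis.Analysis"
begin

definition C2_fun :: "'a::euclidean_space set \<Rightarrow> ('a \<Rightarrow> real) \<Rightarrow> bool" where
  "C2_fun U \<phi> \<longleftrightarrow> (\<exists>g (g' :: 'a \<Rightarrow> 'a \<Rightarrow>\<^sub>L 'a).
      (\<forall>z\<in>U. (\<phi> has_derivative (\<lambda>h. g z \<bullet> h)) (at z)
             \<and> (g has_derivative blinfun_apply (g' z)) (at z))
      \<and> continuous_on U g')"

definition local_defining_fun ::
  "'a::euclidean_space set \<Rightarrow> 'a \<Rightarrow> 'a set \<Rightarrow> ('a \<Rightarrow> real) \<Rightarrow> bool" where
  "local_defining_fun E x U \<phi> \<longleftrightarrow> open U \<and> x \<in> U \<and> C2_fun U \<phi>
     \<and> (\<forall>z\<in>U. \<forall>v. (\<phi> has_derivative (\<lambda>h. v \<bullet> h)) (at z) \<longrightarrow> v \<noteq> 0)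
     \<and> E \<inter> U = {z\<in>U. \<phi> z < 0}"

definition C2_regular :: "'a::euclidean_space set \<Rightarrow> bool" where
  "C2_regular E \<longleftrightarrow> (\<forall>x\<in>frontier E. \<exists>U \<phi>. local_defining_fun E x U \<phi>)"

definition outer_normal :: "'a::euclidean_space set \<Rightarrow> 'a \<Rightarrow> 'a" where
  "outer_normal E x = (SOME n. \<exists>U \<phi> v. local_defining_fun E x U \<phi>
      \<and> (\<phi> has_derivative (\<lambda>h. v \<bullet> h)) (at x) \<and> n = v /\<^sub>R norm v)"

definition tan_proj :: "'a::euclidean_space set \<Rightarrow> 'a \<Rightarrow> 'a \<Rightarrow> 'a" where
  "tan_proj E x v = v - (v \<bullet> outer_normal E x) *\<^sub>R outer_normal E x"

text \<open>Second fundamental form B_E(x) = tangential gradient of nu_E at x, as a linear map: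
  its restriction to tangent vectors is the derivative of nu_E along dE, and
  B_E(x) = B_E(x) P_{dE}(x).\<close>
definition second_fund :: "'a::euclidean_space set \<Rightarrow> 'a \<Rightarrow> 'a \<Rightarrow> 'a" where
  "second_fund E x = (SOME L. linear L \<and> (\<forall>v. L v = L (tan_proj E x v))
      \<and> (outer_normal E has_derivative L) (at x within frontier E))"

definition S_fun :: "'a::euclidean_space set \<Rightarrow> real \<Rightarrow> 'a \<Rightarrow> 'a \<Rightarrow> real" where
  "S_fun E \<epsilon> x y = ((x - y) \<bullet> outer_normal E x) / ((norm (x - y))\<^sup>2 + \<epsilon>)"

definition signed_dist :: "'a::euclidean_space set \<Rightarrow> 'a \<Rightarrow> real" where
  "signed_dist E z = infdist z E - infdist z (- E)"

definition r_E :: "'a::euclidean_space set \<Rightarrow> real" where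
  "r_E E = Sup {r. r > 0 \<and> (\<forall>z. infdist z (frontier E) < r
                    \<longrightarrow> signed_dist E differentiable (at z))}"

definition local_max_on :: "('a::metric_space \<Rightarrow> 'a \<Rightarrow> real) \<Rightarrow> 'a set \<Rightarrow> 'a \<Rightarrow> 'a \<Rightarrow> bool" where
  "local_max_on F A x y \<longleftrightarrow> x \<in> A \<and> y \<in> A \<and> (\<exists>r>0. \<forall>x'\<in>A. \<forall>y'\<in>A.
      dist x' x < r \<and> dist y' y < r \<longrightarrow> F x' y' \<le> F x y)"

definition local_min_on :: "('a::metric_space \<Rightarrow> 'a \<Rightarrow> real) \<Rightarrow> 'a set \<Rightarrow> 'a \<Rightarrow> 'a \<Rightarrow> bool" where
  "local_min_on F A x y \<longleftrightarrow> x \<in> A \<and> y \<in> A \<and> (\<exists>r>0. \<forall>x'\<in>A. \<forall>y'\<in>A.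
      dist x' x < r \<and> dist y' y < r \<longrightarrow> F x' y' \<ge> F x y)"

end

theory Submission
  imports Defs
begin

lemma half_lt: "(0::real) < a \<Longrightarrow> t \<le> a / 2 \<Longrightarrow> t < a" by linarith

locale ldfd =
  fixes E :: "'a::euclidean_space set" and U :: "'a set" and \<phi> :: "'a \<Rightarrow> real"
    and g :: "'a \<Rightarrow> 'a" and g' :: "'a \<Rightarrow> 'a \<Rightarrow>\<^sub>L 'a"
  assumes U_open: "open U"
    and phi_deriv: "\<And>z. z \<in> U \<Longrightarrow> (\<phi> has_derivative (\<lambda>h. g z \<bullet> h)) (at z)"
    and g_deriv: "\<And>z. z \<in> U \<Longrightarrow> (g has_derivative blinfun_apply (g' z)) (at z)"
    and g'_cont: "continuous_on U g'"
    and g_nz: "\<And>z. z \<in> U \<Longrightarrow> g z \<noteq> 0"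
    and E_U: "E \<inter> U = {z\<in>U. \<phi> z < 0}"
begin

lemma EU_iff: "z \<in> U \<Longrightarrow> z \<in> E \<longleftrightarrow> \<phi> z < 0"
proof -
  assume z: "z \<in> U"
  have "z \<in> E \<inter> U \<longleftrightarrow> z \<in> {z\<in>U. \<phi> z < 0}" using E_U by simp
  then show ?thesis using z by auto
qed

lemma phi_cont: "continuous_on U \<phi>"
  by (meson continuous_at_imp_continuous_on has_derivative_continuous phi_deriv)

lemma g_cont: "continuous_on U g"
  by (meson continuous_at_imp_continuous_on has_derivative_continuous g_deriv)

lemma line_deriv:
  assumes "z \<in> U"
  shows "((\<lambda>t. \<phi> (z + t *\<^sub>R h)) has_real_derivative (g z \<bullet> h)) (at 0)"
proof -
  have "((\<lambda>r. z + r *\<^sub>R h) has_derivative (\<lambda>r. r *\<^sub>R h)) (at 0)"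
    by (intro derivative_eq_intros) auto
  then have "((\<lambda>r. \<phi> (z + r *\<^sub>R h)) has_derivative (\<lambda>k. g z \<bullet> (k *\<^sub>R h))) (at 0)"
    by (rule has_derivative_compose, simp add: phi_deriv assms)
  then show ?thesis
    unfolding has_field_derivative_def by (rule has_derivative_eq_rhs) (auto simp: fun_eq_iff)
qed

lemma open_EU: "open (E \<inter> U)"
proof -
  have "open (U \<inter> \<phi> -` {..<0})"
    by (rule continuous_open_preimage[OF phi_cont U_open]) auto
  moreover have "U \<inter> \<phi> -` {..<0} = E \<inter> U" using E_U by auto
  ultimately show ?thesis by simp
qed

lemma pos_not_closure:
  assumes "q \<in> U" "\<phi> q > 0"
  shows "q \<notin> closure E"
proof -
  have o: "open (U \<inter> \<phi> -` {0<..})"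
    by (rule continuous_open_preimage[OF phi_cont U_open]) auto
  have "(U \<inter> \<phi> -` {0<..}) \<inter> E = {}" using EU_iff by fastforce
  then have "(U \<inter> \<phi> -` {0<..}) \<inter> closure E = {}"
    using open_Int_closure_eq_empty[OF o] by blast
  then show ?thesis using assms by auto
qed

lemma frontier_phi0:
  assumes "q \<in> U" "q \<in> frontier E"
  shows "\<phi> q = 0"
proof -
  have "\<not> \<phi> q < 0"
  proof
    assume "\<phi> q < 0"
    then have "q \<in> E \<inter> U" using EU_iff assms by auto
    then have "q \<in> interior E" using open_EU interior_maximal[of "E \<inter> U" E] by blast
    then show False using assms by (simp add: frontier_def)
  qed
  moreover have "\<not> \<phi> q > 0"
    using pos_not_closure assms frontier_def by auto
  ultimately show ?thesis by auto
qed

lemma phi0_frontier: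
  assumes "q \<in> U" "\<phi> q = 0"
  shows "q \<in> frontier E"
proof -
  have qE: "q \<notin> E" using EU_iff assms by auto
  obtain e where e: "e > 0" "ball q e \<subseteq> U" using U_open assms openE by blast
  have gq: "g q \<noteq> 0" using g_nz assms by auto
  have der: "((\<lambda>t. \<phi> (q + t *\<^sub>R (- g q))) has_real_derivative (g q \<bullet> (- g q))) (at 0)"
    by (rule line_deriv[OF assms(1)])
  have neg: "g q \<bullet> (- g q) < 0" using gq by simp
  obtain d where d0: "d > 0" and d1: "\<forall>h>0. h < d \<longrightarrow> \<phi> (q + 0 *\<^sub>R (- g q)) > \<phi> (q + (0 + h) *\<^sub>R (- g q))"
    using DERIV_neg_dec_right[OF der neg] by blast
  have d: "\<phi> (q + h *\<^sub>R (- g q)) < 0" if "h > 0" "h < d" for h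
    using d1 that assms(2) by simp
  have "q \<in> closure E"
    unfolding closure_approachable
  proof (intro allI impI)
    fix ep :: real assume ep: "ep > 0"
    define N where "N = norm (g q)"
    have N: "N > 0" using gq by (simp add: N_def)
    define t where "t = min d (min (ep / N) (e / N)) / 2"
    have t0: "t > 0" using d0 ep e N by (simp add: t_def)
    have td: "t < d" using d0 t0 by (simp add: t_def)
    have "ep / N > 0" "e / N > 0" using ep e N by auto
    have "t \<le> (ep / N) / 2" "t \<le> (e / N) / 2" by (auto simp: t_def)
    have "t < ep / N" using \<open>ep / N > 0\<close> \<open>t \<le> (ep / N) / 2\<close> half_lt by blast
    then have tn1: "t * N < ep" using N by (simp add: less_divide_eq)
    have "t < e / N" using \<open>e / N > 0\<close> \<open>t \<le> (e / N) / 2\<close> half_lt by blast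
    then have tn2: "t * N < e" using N by (simp add: less_divide_eq)
    note tn1 = tn1[unfolded N_def] and tn2 = tn2[unfolded N_def]
    let ?y = "q + t *\<^sub>R (- g q)"
    have dy: "dist ?y q = t * norm (g q)" using t0 by (simp add: dist_norm)
    have "?y \<in> U" using e(2) dy tn2 by (auto simp: dist_commute)
    moreover have "\<phi> ?y < 0" using d[OF t0 td] .
    ultimately have "?y \<in> E" using EU_iff by auto
    moreover have "dist ?y q < ep" using dy tn1 by linarith
    ultimately show "\<exists>y\<in>E. dist y q < ep" by blast
  qed
  then show ?thesis using qE interior_subset frontier_def by fastforce
qed

end

lemma grad_unique:
  fixes v w :: "'a::real_inner"
  assumes "(f has_derivative (\<lambda>h. v \<bullet> h)) (at z)" "(f has_derivative (\<lambda>h. w \<bullet> h)) (at z)"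
  shows "v = w"
proof -
  have "(\<lambda>h. v \<bullet> h) = (\<lambda>h. w \<bullet> h)" using has_derivative_unique[OF assms] .
  then have "v \<bullet> (v - w) = w \<bullet> (v - w)" by metis
  then have "(v - w) \<bullet> (v - w) = 0" by (simp add: inner_diff_left inner_diff_right inner_commute)
  then show ?thesis by simp
qed

lemma ldf_obtain:
  assumes "local_defining_fun E x U \<phi>"
  obtains g g' where "ldfd E U \<phi> g g'" "x \<in> U"
proof -
  from assms have o: "open U" and x: "x \<in> U" and c2: "C2_fun U \<phi>"
    and nz: "\<forall>z\<in>U. \<forall>v. (\<phi> has_derivative (\<lambda>h. v \<bullet> h)) (at z) \<longrightarrow> v \<noteq> 0"
    and eu: "E \<inter> U = {z\<in>U. \<phi> z < 0}"
    unfolding local_defining_fun_def by auto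
  from c2 obtain g and g' :: "'a \<Rightarrow> 'a \<Rightarrow>\<^sub>L 'a" where
    gg: "\<forall>z\<in>U. (\<phi> has_derivative (\<lambda>h. g z \<bullet> h)) (at z) \<and> (g has_derivative blinfun_apply (g' z)) (at z)"
    and gc: "continuous_on U g'"
    unfolding C2_fun_def by blast
  have "ldfd E U \<phi> g g'"
    by (unfold_locales) (use o gg gc nz eu in auto)
  then show ?thesis using that x by blast
qed

context ldfd
begin

lemma is_ldf: "q \<in> U \<Longrightarrow> local_defining_fun E q U \<phi>"
  unfolding local_defining_fun_def C2_fun_def
  using U_open phi_deriv g_deriv g'_cont g_nz E_U grad_unique by metis

lemma ev_in_U: "q \<in> U \<Longrightarrow> \<forall>\<^sub>F t in at_right 0. q + t *\<^sub>R h \<in> U"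
proof -
  assume q: "q \<in> U"
  have "((\<lambda>t. q + t *\<^sub>R h) \<longlongrightarrow> q + 0 *\<^sub>R h) (at_right 0)"
    by (intro tendsto_intros)
  then have "((\<lambda>t. q + t *\<^sub>R h) \<longlongrightarrow> q) (at_right 0)" by simp
  then show ?thesis using topological_tendstoD[OF _ U_open q] by blast
qed

lemma ev_neg:
  assumes "q \<in> U" "\<phi> q = 0" "g q \<bullet> h < 0"
  shows "\<forall>\<^sub>F t in at_right 0. \<phi> (q + t *\<^sub>R h) < 0"
proof -
  obtain d where d: "d > 0" "\<forall>t>0. t < d \<longrightarrow> \<phi> (q + 0 *\<^sub>R h) > \<phi> (q + (0 + t) *\<^sub>R h)"
    using DERIV_neg_dec_right[OF line_deriv[OF assms(1)] assms(3)] by blast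
  then show ?thesis unfolding eventually_at_right_field using assms(2)
    by (intro exI[of _ d]) auto
qed

lemma ev_pos:
  assumes "q \<in> U" "\<phi> q = 0" "g q \<bullet> h > 0"
  shows "\<forall>\<^sub>F t in at_right 0. \<phi> (q + t *\<^sub>R h) > 0"
proof -
  obtain d where d: "d > 0" "\<forall>t>0. t < d \<longrightarrow> \<phi> (q + 0 *\<^sub>R h) < \<phi> (q + (0 + t) *\<^sub>R h)"
    using DERIV_pos_inc_right[OF line_deriv[OF assms(1)] assms(3)] by blast
  then show ?thesis unfolding eventually_at_right_field using assms(2)
    by (intro exI[of _ d]) auto
qed

end

lemma normal_unique:
  assumes l1: "ldfd E U1 \<phi>1 g1 g1'" and l2: "ldfd E U2 \<phi>2 g2 g2'"
    and q: "q \<in> U1" "q \<in> U2" "q \<in> frontier E"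
  shows "g1 q /\<^sub>R norm (g1 q) = g2 q /\<^sub>R norm (g2 q)"
proof (rule ccontr)
  interpret A: ldfd E U1 \<phi>1 g1 g1' by (rule l1)
  interpret B: ldfd E U2 \<phi>2 g2 g2' by (rule l2)
  define a where "a = g1 q /\<^sub>R norm (g1 q)"
  define b where "b = g2 q /\<^sub>R norm (g2 q)"
  assume ne: "a \<noteq> b"
  have n1: "g1 q \<noteq> 0" using A.g_nz q by auto
  have n2: "g2 q \<noteq> 0" using B.g_nz q by auto
  have na: "a \<bullet> a = 1" using n1 by (simp add: a_def dot_square_norm)
  have nb: "b \<bullet> b = 1" using n2 by (simp add: b_def dot_square_norm)
  have "0 < (a - b) \<bullet> (a - b)" using ne by simp
  then have ab: "a \<bullet> b < 1" using na nb by (simp add: inner_diff_left inner_diff_right inner_commute)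
  define h where "h = b - a"
  have g1a: "g1 q = norm (g1 q) *\<^sub>R a" using n1 by (simp add: a_def)
  have g2b: "g2 q = norm (g2 q) *\<^sub>R b" using n2 by (simp add: b_def)
  have "g1 q \<bullet> h = norm (g1 q) * (a \<bullet> b - 1)"
    by (subst g1a) (simp add: h_def inner_diff_right na inner_commute)
  then have h1: "g1 q \<bullet> h < 0" using n1 ab by (simp add: mult_pos_neg)
  have "g2 q \<bullet> h = norm (g2 q) * (1 - a \<bullet> b)"
    by (subst g2b) (simp add: h_def inner_diff_right nb inner_commute)
  then have h2: "g2 q \<bullet> h > 0" using n2 ab by simp
  have p1: "\<phi>1 q = 0" using A.frontier_phi0 q by auto
  have p2: "\<phi>2 q = 0" using B.frontier_phi0 q by auto
  have "\<forall>\<^sub>F t in at_right 0. (q + t *\<^sub>R h \<in> U1 \<and> \<phi>1 (q + t *\<^sub>R h) < 0)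
      \<and> (q + t *\<^sub>R h \<in> U2 \<and> \<phi>2 (q + t *\<^sub>R h) > 0)"
    by (intro eventually_conj A.ev_in_U B.ev_in_U A.ev_neg B.ev_pos q p1 p2 h1 h2)
  then obtain t where t: "q + t *\<^sub>R h \<in> U1" "\<phi>1 (q + t *\<^sub>R h) < 0"
      "q + t *\<^sub>R h \<in> U2" "\<phi>2 (q + t *\<^sub>R h) > 0"
    using eventually_happens[of _ "at_right (0::real)"] by auto
  then show False using A.EU_iff[OF t(1)] B.EU_iff[OF t(3)] by auto
qed

context ldfd
begin

lemma outer_normal_eq:
  assumes q: "q \<in> U" "q \<in> frontier E"
  shows "outer_normal E q = g q /\<^sub>R norm (g q)"
proof -
  have ex: "\<exists>n U' \<phi>' v. local_defining_fun E q U' \<phi>' \<and> (\<phi>' has_derivative (\<lambda>h. v \<bullet> h)) (at q)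
      \<and> n = v /\<^sub>R norm v"
    using is_ldf[OF q(1)] phi_deriv[OF q(1)] by blast
  obtain U' \<phi>' v where L: "local_defining_fun E q U' \<phi>'"
    and D: "(\<phi>' has_derivative (\<lambda>h. v \<bullet> h)) (at q)"
    and N: "outer_normal E q = v /\<^sub>R norm v"
    using someI_ex[OF ex] unfolding outer_normal_def by blast
  obtain g2 g2' where l2: "ldfd E U' \<phi>' g2 g2'" and qU: "q \<in> U'"
    using ldf_obtain[OF L] by blast
  have "v = g2 q" using grad_unique[OF D ldfd.phi_deriv[OF l2 qU]] .
  then show ?thesis using N normal_unique[OF l2 ldfd_axioms qU q(1) q(2)] by simp
qed

end

lemma norm_half_pos: "norm (x - a) \<le> a / 2 \<Longrightarrow> 0 < a \<Longrightarrow> 0 < (x::real)"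
  unfolding real_norm_def by (cases "x - a \<ge> 0"; cases "x + a \<ge> 0") (auto simp: abs_if)
lemma norm_half_neg: "norm (x + a) \<le> a / 2 \<Longrightarrow> 0 < a \<Longrightarrow> (x::real) < 0"
  unfolding real_norm_def by (cases "x - a \<ge> 0"; cases "x + a \<ge> 0") (auto simp: abs_if)

context ldfd
begin

lemma tangent_points:
  assumes p: "p \<in> U" "\<phi> p = 0" and tau: "g p \<bullet> \<tau> = 0" and eta: "\<eta> > 0"
  shows "\<exists>t0>0. \<forall>t. 0 < t \<longrightarrow> t < t0 \<longrightarrow> (\<exists>q \<in> frontier E. norm (q - p - t *\<^sub>R \<tau>) \<le> \<eta> * t)"
proof -
  define G where "G = g p"
  define N where "N = norm G"
  define n where "n = G /\<^sub>R N"
  have N0: "N > 0" using g_nz p by (simp add: N_def G_def)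
  have nn: "norm n = 1" using N0 by (simp add: n_def N_def)
  have Gn: "G \<bullet> n = N" using N0 by (simp add: n_def N_def dot_square_norm power2_eq_square)
  have Gt: "G \<bullet> \<tau> = 0" using tau by (simp add: G_def)
  define e where "e = \<eta> * N / (2 * (norm \<tau> + \<eta>))"
  have tpos: "norm \<tau> + \<eta> > 0" using eta by (simp add: add_nonneg_pos)
  have e0: "e > 0" using eta N0 tpos by (simp add: e_def)
  have eN: "e * (norm \<tau> + \<eta>) = \<eta> * N / 2" using tpos by (simp add: e_def field_simps)
  obtain d where d0: "d > 0" and d: "\<And>y. norm (y - p) < d \<Longrightarrow> norm (\<phi> y - \<phi> p - G \<bullet> (y - p)) \<le> e * norm (y - p)"
    using phi_deriv[OF p(1)] e0 unfolding has_derivative_at_alt G_def by blast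
  obtain d1 where d10: "d1 > 0" and d1: "ball p d1 \<subseteq> U" using U_open p(1) openE by blast
  define t0 where "t0 = min d d1 / (norm \<tau> + \<eta>)"
  have t00: "t0 > 0" using d0 d10 tpos by (simp add: t0_def)
  show ?thesis
  proof (intro exI[of _ t0] conjI allI impI t00)
    fix t :: real assume t: "0 < t" "t < t0"
    have tt: "t * (norm \<tau> + \<eta>) < min d d1" using t tpos by (simp add: t0_def pos_less_divide_eq)
    define F where "F s = \<phi> (p + t *\<^sub>R \<tau> + s *\<^sub>R n)" for s
    have nk: "norm (t *\<^sub>R \<tau> + s *\<^sub>R n) \<le> t * (norm \<tau> + \<eta>)" if "\<bar>s\<bar> \<le> \<eta> * t" for s
    proof -
      have "norm (t *\<^sub>R \<tau> + s *\<^sub>R n) \<le> norm (t *\<^sub>R \<tau>) + norm (s *\<^sub>R n)" by (rule norm_triangle_ineq)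
      also have "\<dots> = t * norm \<tau> + \<bar>s\<bar>" using t nn by simp
      also have "\<dots> \<le> t * (norm \<tau> + \<eta>)" using that by (simp add: algebra_simps)
      finally show ?thesis .
    qed
    have inU: "p + t *\<^sub>R \<tau> + s *\<^sub>R n \<in> U" and est: "norm (F s - G \<bullet> (t *\<^sub>R \<tau> + s *\<^sub>R n)) \<le> e * (t * (norm \<tau> + \<eta>))"
      if "\<bar>s\<bar> \<le> \<eta> * t" for s
    proof -
      have k: "norm (t *\<^sub>R \<tau> + s *\<^sub>R n) < min d d1" using nk[OF that] tt by linarith
      have "dist p (p + (t *\<^sub>R \<tau> + s *\<^sub>R n)) < d1" using k
        by (metis add_diff_cancel_left' dist_commute dist_norm min_less_iff_conj)
      then show "p + t *\<^sub>R \<tau> + s *\<^sub>R n \<in> U" using d1 by (auto simp: add.assoc)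
      have "norm (F s - G \<bullet> (t *\<^sub>R \<tau> + s *\<^sub>R n)) \<le> e * norm (t *\<^sub>R \<tau> + s *\<^sub>R n)"
        using d[of "p + t *\<^sub>R \<tau> + s *\<^sub>R n"] k p(2) by (simp add: F_def add.assoc)
      also have "\<dots> \<le> e * (t * (norm \<tau> + \<eta>))" using nk[OF that] e0 by simp
      finally show "norm (F s - G \<bullet> (t *\<^sub>R \<tau> + s *\<^sub>R n)) \<le> e * (t * (norm \<tau> + \<eta>))" .
    qed
    have Gk: "G \<bullet> (t *\<^sub>R \<tau> + s *\<^sub>R n) = s * N" for s
      using Gt Gn by (simp add: inner_add_right)
    have ee: "e * (t * (norm \<tau> + \<eta>)) = \<eta> * t * N / 2"
    proof -
      have "e * (t * (norm \<tau> + \<eta>)) = t * (e * (norm \<tau> + \<eta>))" by (simp add: algebra_simps)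
      also have "\<dots> = t * (\<eta> * N / 2)" using eN by (rule arg_cong)
      finally show ?thesis by simp
    qed
    have et: "\<eta> * t > 0" using eta t by simp
    have Fp: "F (\<eta> * t) > 0"
    proof -
      have "norm (F (\<eta> * t) - \<eta> * t * N) \<le> \<eta> * t * N / 2"
        using est[of "\<eta> * t"] et Gk[of "\<eta> * t"] ee by simp
      moreover have "\<eta> * t * N > 0" using et N0 by simp
      ultimately show ?thesis by (rule norm_half_pos)
    qed
    have Fm: "F (- (\<eta> * t)) < 0"
    proof -
      have "norm (F (- (\<eta> * t)) + \<eta> * t * N) \<le> \<eta> * t * N / 2"
        using est[of "- (\<eta> * t)"] et Gk[of "- (\<eta> * t)"] ee by simp
      moreover have "\<eta> * t * N > 0" using et N0 by simp
      ultimately show ?thesis by (rule norm_half_neg)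
    qed
    have cont: "continuous_on {- (\<eta> * t) .. \<eta> * t} F"
      unfolding F_def
      by (rule continuous_on_compose2[OF phi_cont]) (auto intro!: continuous_intros inU)
    obtain s where s: "- (\<eta> * t) \<le> s" "s \<le> \<eta> * t" "F s = 0"
      using IVT'[of F "- (\<eta> * t)" 0 "\<eta> * t"] Fp Fm cont et by auto
    have sa: "\<bar>s\<bar> \<le> \<eta> * t" using s by simp
    let ?q = "p + t *\<^sub>R \<tau> + s *\<^sub>R n"
    have "?q \<in> frontier E" using phi0_frontier[OF inU[OF sa]] s(3) by (simp add: F_def)
    moreover have "norm (?q - p - t *\<^sub>R \<tau>) \<le> \<eta> * t" using sa nn by simp
    ultimately show "\<exists>q \<in> frontier E. norm (q - p - t *\<^sub>R \<tau>) \<le> \<eta> * t" by blast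
  qed
qed

end

context ldfd
begin

lemma max_tangent:
  fixes f :: "'a \<Rightarrow> real"
  assumes p: "p \<in> U" "p \<in> frontier E" and f: "(f has_derivative f') (at p)"
    and dl: "\<delta> > 0" and mx: "\<forall>q\<in>frontier E. dist q p < \<delta> \<longrightarrow> f q \<le> f p"
    and tau: "g p \<bullet> \<tau> = 0"
  shows "f' \<tau> \<le> 0"
proof (rule ccontr)
  assume "\<not> f' \<tau> \<le> 0"
  then have c0: "f' \<tau> > 0" by simp
  define c where "c = f' \<tau>"
  have bl: "bounded_linear f'" using f by (rule has_derivative_bounded_linear)
  obtain K where K0: "K > 0" and K: "\<And>v. norm (f' v) \<le> norm v * K"
    using bounded_linear.pos_bounded[OF bl] by blast
  define \<eta> where "\<eta> = c / (4 * K)"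
  have eta0: "\<eta> > 0" using c0 K0 by (simp add: \<eta>_def c_def)
  have tpos: "norm \<tau> + \<eta> > 0" using eta0 by (simp add: add_nonneg_pos)
  define e where "e = c / (4 * (norm \<tau> + \<eta>))"
  have e0: "e > 0" using c0 tpos by (simp add: e_def c_def)
  obtain d1 where d10: "d1 > 0" and d1: "\<And>y. norm (y - p) < d1 \<Longrightarrow> norm (f y - f p - f' (y - p)) \<le> e * norm (y - p)"
    using f e0 unfolding has_derivative_at_alt by blast
  have p0: "\<phi> p = 0" using frontier_phi0 p by auto
  obtain t0 where t00: "t0 > 0" and t0: "\<And>t. 0 < t \<Longrightarrow> t < t0 \<Longrightarrow> \<exists>q \<in> frontier E. norm (q - p - t *\<^sub>R \<tau>) \<le> \<eta> * t"
    using tangent_points[OF p(1) p0 tau eta0] by blast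
  define t where "t = min (t0 / 2) (min d1 \<delta> / (2 * (norm \<tau> + \<eta>)))"
  have t_pos: "t > 0" using t00 d10 dl tpos by (simp add: t_def)
  have "t \<le> t0 / 2" unfolding t_def by (rule min.cobounded1)
  then have tt0: "t < t0" using t00 by linarith
  have "t \<le> min d1 \<delta> / (2 * (norm \<tau> + \<eta>))" unfolding t_def by (rule min.cobounded2)
  then have "t * (2 * (norm \<tau> + \<eta>)) \<le> min d1 \<delta>" using tpos by (simp add: le_divide_eq)
  moreover have "t * (norm \<tau> + \<eta>) > 0" using t_pos tpos by simp
  moreover have "t * (2 * (norm \<tau> + \<eta>)) = 2 * (t * (norm \<tau> + \<eta>))" by simp
  ultimately have tdl: "t * (norm \<tau> + \<eta>) < min d1 \<delta>" by linarith
  obtain q where qE: "q \<in> frontier E" and qn: "norm (q - p - t *\<^sub>R \<tau>) \<le> \<eta> * t"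
    using t0[OF t_pos tt0] by blast
  have "norm (q - p) \<le> norm (t *\<^sub>R \<tau>) + norm (q - p - t *\<^sub>R \<tau>)"
    by (metis add.commute diff_add_cancel norm_triangle_ineq)
  also have "\<dots> \<le> t * norm \<tau> + \<eta> * t" using qn t_pos by simp
  finally have qp: "norm (q - p) \<le> t * (norm \<tau> + \<eta>)" by (simp add: algebra_simps)
  then have qp1: "norm (q - p) < d1" and qp2: "dist q p < \<delta>" using tdl by (auto simp: dist_norm)
  have le: "f q \<le> f p" using mx qE qp2 by auto
  have lin: "f' (q - p) = t * c + f' (q - p - t *\<^sub>R \<tau>)"
    using linear_diff[OF bounded_linear.linear[OF bl]] linear_scale[OF bounded_linear.linear[OF bl]] by (simp add: c_def)
  have "norm (f' (q - p - t *\<^sub>R \<tau>)) \<le> \<eta> * t * K"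
    using K[of "q - p - t *\<^sub>R \<tau>"] qn K0 by (smt (verit) mult_right_mono)
  also have "\<eta> * t * K = t * c / 4" using K0 by (simp add: \<eta>_def)
  finally have "- f' (q - p - t *\<^sub>R \<tau>) \<le> t * c / 4" unfolding real_norm_def by (rule abs_le_D2)
  then have l1: "f' (q - p) \<ge> t * c - t * c / 4" using lin by linarith
  have "norm (f q - f p - f' (q - p)) \<le> e * norm (q - p)" using d1[OF qp1] .
  also have "\<dots> \<le> e * (t * (norm \<tau> + \<eta>))" using qp e0 by (simp add: mult_left_mono)
  also have "\<dots> = t * c / 4" using tpos unfolding e_def by (simp add: field_simps)
  finally have "- (f q - f p - f' (q - p)) \<le> t * c / 4" unfolding real_norm_def by (rule abs_le_D2)
  then have l2: "f q - f p \<ge> f' (q - p) - t * c / 4" by linarith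
  have "t * c > 0" using t_pos c0 by (simp add: c_def)
  then show False using l1 l2 le by linarith
qed

lemma crit_tangent:
  fixes f :: "'a \<Rightarrow> real"
  assumes p: "p \<in> U" "p \<in> frontier E" and f: "(f has_derivative f') (at p)"
    and dl: "\<delta> > 0"
    and mx: "(\<forall>q\<in>frontier E. dist q p < \<delta> \<longrightarrow> f q \<le> f p) \<or> (\<forall>q\<in>frontier E. dist q p < \<delta> \<longrightarrow> f p \<le> f q)"
    and tau: "g p \<bullet> \<tau> = 0"
  shows "f' \<tau> = 0"
proof -
  have bl: "bounded_linear f'" using f by (rule has_derivative_bounded_linear)
  have tau': "g p \<bullet> (- \<tau>) = 0" using tau by simp
  have neg: "f' (- \<tau>) = - f' \<tau>" using linear_neg[OF bounded_linear.linear[OF bl]] .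
  from mx show ?thesis
  proof
    assume m: "\<forall>q\<in>frontier E. dist q p < \<delta> \<longrightarrow> f q \<le> f p"
    show ?thesis using max_tangent[OF p f dl m tau] max_tangent[OF p f dl m tau'] neg by simp
  next
    assume m: "\<forall>q\<in>frontier E. dist q p < \<delta> \<longrightarrow> f p \<le> f q"
    have m': "\<forall>q\<in>frontier E. dist q p < \<delta> \<longrightarrow> - f q \<le> - f p" using m by auto
    have f': "((\<lambda>x. - f x) has_derivative (\<lambda>h. - f' h)) (at p)" using f by (rule has_derivative_minus)
    show ?thesis using max_tangent[OF p f' dl m' tau] max_tangent[OF p f' dl m' tau'] neg by simp
  qed
qed

end

context ldfd
begin

lemma line_deriv2:
  assumes "z + \<theta> *\<^sub>R h \<in> U"
  shows "((\<lambda>t. \<phi> (z + t *\<^sub>R h)) has_derivative (\<lambda>k. k * (g (z + \<theta> *\<^sub>R h) \<bullet> h))) (at \<theta>)"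
proof -
  have "((\<lambda>r. z + r *\<^sub>R h) has_derivative (\<lambda>r. r *\<^sub>R h)) (at \<theta>)"
    by (intro derivative_eq_intros) auto
  then have "((\<lambda>r. \<phi> (z + r *\<^sub>R h)) has_derivative (\<lambda>k. g (z + \<theta> *\<^sub>R h) \<bullet> (k *\<^sub>R h))) (at \<theta>)"
    by (rule has_derivative_compose, simp add: phi_deriv assms)
  then show ?thesis by (rule has_derivative_eq_rhs) (auto simp: fun_eq_iff)
qed

lemma hess_est:
  assumes x: "x \<in> U" and e0: "e > 0" and d0: "d > 0" and dU: "ball x d \<subseteq> U"
    and dg: "\<And>y. norm (y - x) < d \<Longrightarrow> norm (g y - g x - blinfun_apply (g' x) (y - x)) \<le> e * norm (y - x)"
    and s0: "s > 0" and sd: "s * (norm a + norm b) < d"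
  shows "\<bar>\<phi> (x + s *\<^sub>R a + s *\<^sub>R b) - \<phi> (x + s *\<^sub>R a) - \<phi> (x + s *\<^sub>R b) + \<phi> x
           - s * s * (a \<bullet> blinfun_apply (g' x) b)\<bar> \<le> s * (s * e * norm a * (2 * norm a + norm b))"
proof -
  define A where "A = a \<bullet> blinfun_apply (g' x) b"
  define z1 where "z1 = x + s *\<^sub>R b"
  define chi where "chi \<theta> = \<phi> (z1 + \<theta> *\<^sub>R a) - \<phi> (x + \<theta> *\<^sub>R a) - \<theta> * (s * A)" for \<theta>
  define B where "B = s * e * norm a * (2 * norm a + norm b)"
  have small: "norm (\<theta> *\<^sub>R a + \<sigma> *\<^sub>R b) < d" if "\<theta> \<in> {0..s}" "\<sigma> \<in> {0..s}" for \<theta> \<sigma>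
  proof -
    have "norm (\<theta> *\<^sub>R a + \<sigma> *\<^sub>R b) \<le> \<theta> * norm a + \<sigma> * norm b"
      using that norm_triangle_ineq[of "\<theta> *\<^sub>R a" "\<sigma> *\<^sub>R b"] by simp
    also have "\<dots> \<le> s * norm a + s * norm b"
      using that by (intro add_mono mult_right_mono) auto
    finally show ?thesis using sd by (simp add: algebra_simps)
  qed
  have inball: "x + (\<theta> *\<^sub>R a + \<sigma> *\<^sub>R b) \<in> U" if "\<theta> \<in> {0..s}" "\<sigma> \<in> {0..s}" for \<theta> \<sigma>
  proof -
    have "dist x (x + (\<theta> *\<^sub>R a + \<sigma> *\<^sub>R b)) < d" using small[OF that]
      by (metis add_diff_cancel_left' dist_commute dist_norm)
    then show ?thesis using dU by auto
  qed
  have in1: "z1 + \<theta> *\<^sub>R a \<in> U" and in2: "x + \<theta> *\<^sub>R a \<in> U" if "\<theta> \<in> {0..s}" for \<theta>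
  proof -
    show "z1 + \<theta> *\<^sub>R a \<in> U" using inball[OF that, of s] s0 by (simp add: z1_def algebra_simps)
    show "x + \<theta> *\<^sub>R a \<in> U" using inball[OF that, of 0] s0 by simp
  qed
  define c where "c \<theta> = g (z1 + \<theta> *\<^sub>R a) \<bullet> a - g (x + \<theta> *\<^sub>R a) \<bullet> a - s * A" for \<theta>
  have der: "(chi has_derivative (\<lambda>h. h * c \<theta>)) (at \<theta> within {0..s})" if "\<theta> \<in> {0..s}" for \<theta>
  proof -
    have "(chi has_derivative (\<lambda>h. h * (g (z1 + \<theta> *\<^sub>R a) \<bullet> a) - h * (g (x + \<theta> *\<^sub>R a) \<bullet> a) - h * (s * A))) (at \<theta>)"
      unfolding chi_def
      by (intro has_derivative_diff line_deriv2 in1 in2 that) (auto intro!: derivative_eq_intros)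
    then have "(chi has_derivative (\<lambda>h. h * c \<theta>)) (at \<theta>)"
      by (rule has_derivative_eq_rhs) (auto simp: fun_eq_iff c_def algebra_simps)
    then show ?thesis by (rule has_derivative_at_withinI)
  qed
  have cb: "\<bar>c \<theta>\<bar> \<le> B" if "\<theta> \<in> {0..s}" for \<theta>
  proof -
    define y1 where "y1 = z1 + \<theta> *\<^sub>R a"
    define y2 where "y2 = x + \<theta> *\<^sub>R a"
    have n1: "norm (y1 - x) < d" using small[OF that, of s] s0 by (simp add: y1_def z1_def algebra_simps)
    have n2: "norm (y2 - x) < d" using small[OF that, of 0] s0 by (simp add: y2_def)
    have lin: "blinfun_apply (g' x) (y1 - x) - blinfun_apply (g' x) (y2 - x) = s *\<^sub>R blinfun_apply (g' x) b"
      by (simp add: y1_def y2_def z1_def blinfun.diff_right[symmetric] blinfun.scaleR_right[symmetric])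
    have eq: "g y1 - g y2 - s *\<^sub>R blinfun_apply (g' x) b
        = (g y1 - g x - blinfun_apply (g' x) (y1 - x)) - (g y2 - g x - blinfun_apply (g' x) (y2 - x))"
      using lin by (simp add: algebra_simps)
    have "norm (g y1 - g y2 - s *\<^sub>R blinfun_apply (g' x) b)
        \<le> e * norm (y1 - x) + e * norm (y2 - x)"
      unfolding eq using dg[OF n1] dg[OF n2] norm_triangle_ineq4 by (smt (verit))
    also have "\<dots> \<le> e * (s * (2 * norm a + norm b))"
    proof -
      have "norm (y1 - x) \<le> \<theta> * norm a + s * norm b"
        using that norm_triangle_ineq[of "s *\<^sub>R b" "\<theta> *\<^sub>R a"] s0
        by (simp add: y1_def z1_def algebra_simps)
      moreover have "norm (y2 - x) = \<theta> * norm a" using that by (simp add: y2_def)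
      moreover have "\<theta> * norm a \<le> s * norm a" using that by (simp add: mult_right_mono)
      ultimately have "norm (y1 - x) + norm (y2 - x) \<le> s * (2 * norm a + norm b)"
        by (simp add: algebra_simps)
      then show ?thesis using e0 by (simp add: distrib_left[symmetric] mult_left_mono)
    qed
    finally have nb: "norm (g y1 - g y2 - s *\<^sub>R blinfun_apply (g' x) b) \<le> e * (s * (2 * norm a + norm b))" .
    have "c \<theta> = (g y1 - g y2 - s *\<^sub>R blinfun_apply (g' x) b) \<bullet> a"
      by (simp add: c_def y1_def y2_def A_def inner_diff_left inner_diff_right inner_commute)
    then have "\<bar>c \<theta>\<bar> \<le> norm (g y1 - g y2 - s *\<^sub>R blinfun_apply (g' x) b) * norm a"
      using Cauchy_Schwarz_ineq2 by simp
    also have "\<dots> \<le> e * (s * (2 * norm a + norm b)) * norm a"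
      using nb by (simp add: mult_right_mono)
    finally show ?thesis by (simp add: B_def algebra_simps)
  qed
  have "norm (chi s - chi 0) \<le> B * norm (s - 0)"
  proof (rule differentiable_bound[where f'="\<lambda>\<theta> h. h * c \<theta>"])
    show "convex {0..s}" by simp
    show "\<And>x. x \<in> {0..s} \<Longrightarrow> (chi has_derivative (\<lambda>h. h * c x)) (at x within {0..s})" by (rule der)
    show "\<And>x. x \<in> {0..s} \<Longrightarrow> onorm (\<lambda>h. h * c x) \<le> B"
    proof (rule onorm_le)
      fix x h assume "x \<in> {0..s}"
      then have "\<bar>c x\<bar> \<le> B" by (rule cb)
      then have "\<bar>h\<bar> * \<bar>c x\<bar> \<le> \<bar>h\<bar> * B" by (rule mult_left_mono) simp
      then show "norm (h * c x) \<le> B * norm h" by (simp add: abs_mult mult.commute)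
    qed
  qed (use s0 in auto)
  moreover have "chi s - chi 0 = \<phi> (x + s *\<^sub>R a + s *\<^sub>R b) - \<phi> (x + s *\<^sub>R a) - \<phi> (x + s *\<^sub>R b) + \<phi> x - s * s * A"
    by (simp add: chi_def z1_def algebra_simps)
  ultimately show ?thesis using s0 by (simp add: A_def B_def mult.commute)
qed

lemma hess_sym:
  assumes x: "x \<in> U"
  shows "a \<bullet> blinfun_apply (g' x) b = b \<bullet> blinfun_apply (g' x) a"
proof (rule ccontr)
  define A where "A = a \<bullet> blinfun_apply (g' x) b"
  define B where "B = b \<bullet> blinfun_apply (g' x) a"
  assume "\<not> ?thesis"
  then have c0: "\<bar>A - B\<bar> > 0" by (simp add: A_def B_def)
  define K where "K = norm a * (2 * norm a + norm b) + norm b * (2 * norm b + norm a)"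
  have K0: "K \<ge> 0" by (simp add: K_def)
  define e where "e = \<bar>A - B\<bar> / (2 * (K + 1))"
  have e0: "e > 0" using c0 K0 by (simp add: e_def)
  obtain d1 where d10: "d1 > 0" and d1: "\<And>y. norm (y - x) < d1 \<Longrightarrow> norm (g y - g x - blinfun_apply (g' x) (y - x)) \<le> e * norm (y - x)"
    using g_deriv[OF x] e0 unfolding has_derivative_at_alt by blast
  obtain d2 where d20: "d2 > 0" and d2: "ball x d2 \<subseteq> U" using U_open x openE by blast
  define d where "d = min d1 d2"
  have d0: "d > 0" using d10 d20 by (simp add: d_def)
  have dU: "ball x d \<subseteq> U" using d2 by (auto simp: d_def)
  have dg: "\<And>y. norm (y - x) < d \<Longrightarrow> norm (g y - g x - blinfun_apply (g' x) (y - x)) \<le> e * norm (y - x)"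
    using d1 by (simp add: d_def)
  define s where "s = d / (2 * (norm a + norm b + 1))"
  have s0: "s > 0" using d0 by (simp add: s_def add_nonneg_pos)
  have pos: "norm a + norm b + 1 > 0" by (simp add: add_nonneg_pos)
  have "s * (norm a + norm b + 1) = d / 2" unfolding s_def using pos by (simp add: field_simps)
  then have sd: "s * (norm a + norm b) < d" using s0 d0 by (simp add: algebra_simps)
  have sd': "s * (norm b + norm a) < d" using sd by (simp add: add.commute)
  note h1 = hess_est[OF x e0 d0 dU dg s0 sd]
  note h2 = hess_est[OF x e0 d0 dU dg s0 sd']
  have sw: "x + s *\<^sub>R b + s *\<^sub>R a = x + s *\<^sub>R a + s *\<^sub>R b" by (simp add: algebra_simps)
  have "\<bar>s * s * A - s * s * B\<bar> \<le> s * (s * e * norm a * (2 * norm a + norm b)) + s * (s * e * norm b * (2 * norm b + norm a))"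
    using h1 h2 unfolding sw A_def B_def by (smt (verit))
  also have "\<dots> = s * s * (e * K)" by (simp add: K_def algebra_simps)
  finally have "s * s * \<bar>A - B\<bar> \<le> s * s * (e * K)"
    by (simp add: abs_mult right_diff_distrib[symmetric])
  then have "\<bar>A - B\<bar> \<le> e * K" using s0 by simp
  moreover have "e * K < \<bar>A - B\<bar>"
  proof -
    have "e * K = \<bar>A - B\<bar> * (K / (2 * (K + 1)))" by (simp add: e_def)
    moreover have "K / (2 * (K + 1)) < 1" using K0 by (simp add: divide_less_eq)
    then have "\<bar>A - B\<bar> * (K / (2 * (K + 1))) < \<bar>A - B\<bar> * 1" by (rule mult_strict_left_mono[OF _ c0])
    ultimately show ?thesis by (metis mult.right_neutral)
  qed
  ultimately show False by linarith
qed

end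

context ldfd
begin

definition DNf :: "'a \<Rightarrow> 'a \<Rightarrow> 'a" where
  "DNf x k = (1 / norm (g x)) *\<^sub>R blinfun_apply (g' x) k
     - ((g x \<bullet> blinfun_apply (g' x) k) / norm (g x) ^ 3) *\<^sub>R g x"

lemma N_deriv:
  assumes x: "x \<in> U"
  shows "((\<lambda>z. g z /\<^sub>R norm (g z)) has_derivative DNf x) (at x)"
proof -
  have gx: "g x \<noteq> 0" using g_nz x by auto
  have n1: "((\<lambda>z. norm (g z)) has_derivative (\<lambda>k. sgn (g x) \<bullet> blinfun_apply (g' x) k)) (at x)"
    using has_derivative_compose[OF g_deriv[OF x] has_derivative_norm[OF gx]] by (simp add: inner_commute)
  have n2: "((\<lambda>z. inverse (norm (g z))) has_derivative
      (\<lambda>k. - (inverse (norm (g x)) * (sgn (g x) \<bullet> blinfun_apply (g' x) k) * inverse (norm (g x))))) (at x)"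
    using Deriv.has_derivative_inverse[OF _ n1] gx by simp
  have "((\<lambda>z. inverse (norm (g z)) *\<^sub>R g z) has_derivative
      (\<lambda>k. inverse (norm (g x)) *\<^sub>R blinfun_apply (g' x) k +
        (- (inverse (norm (g x)) * (sgn (g x) \<bullet> blinfun_apply (g' x) k) * inverse (norm (g x)))) *\<^sub>R g x)) (at x)"
    by (rule has_derivative_scaleR[OF n2 g_deriv[OF x]])
  moreover have "(\<lambda>k. inverse (norm (g x)) *\<^sub>R blinfun_apply (g' x) k +
        (- (inverse (norm (g x)) * (sgn (g x) \<bullet> blinfun_apply (g' x) k) * inverse (norm (g x)))) *\<^sub>R g x) = DNf x"
    using gx by (auto simp: fun_eq_iff DNf_def sgn_div_norm field_simps power3_eq_cube)
  ultimately show ?thesis by (rule has_derivative_eq_rhs)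
qed

lemma DN_normal:
  assumes x: "x \<in> U"
  shows "g x \<bullet> DNf x k = 0"
proof -
  have gx: "norm (g x) \<noteq> 0" using g_nz x by auto
  have "g x \<bullet> g x = norm (g x) ^ 2" by (simp add: dot_square_norm)
  then show ?thesis using gx
    by (simp add: DNf_def inner_diff_right field_simps power3_eq_cube power2_eq_square)
qed

lemma DN_tangent:
  assumes x: "x \<in> U" and a: "a \<bullet> g x = 0"
  shows "a \<bullet> DNf x k = (a \<bullet> blinfun_apply (g' x) k) / norm (g x)"
  using a by (simp add: DNf_def inner_diff_right)

lemma DN_sym:
  assumes x: "x \<in> U" and a: "a \<bullet> g x = 0" and b: "b \<bullet> g x = 0"
  shows "a \<bullet> DNf x b = b \<bullet> DNf x a"
  using DN_tangent[OF x a] DN_tangent[OF x b] hess_sym[OF x] by simp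

end

context ldfd
begin

lemma tan_proj_linear: "linear (tan_proj E x)"
  unfolding tan_proj_def
  by (rule linearI) (simp_all add: inner_add_left algebra_simps)

lemma second_fund_eq:
  assumes x: "x \<in> U" "x \<in> frontier E"
  shows "second_fund E x v = DNf x (tan_proj E x v)"
proof -
  define n where "n = outer_normal E x"
  have n_eq: "n = g x /\<^sub>R norm (g x)" using outer_normal_eq[OF x] by (simp add: n_def)
  have gx: "g x \<noteq> 0" using g_nz x by auto
  define N0 where "N0 = norm (g x)"
  have N0: "N0 > 0" using gx by (simp add: N0_def)
  have nn: "n \<bullet> n = 1" using gx by (simp add: n_eq dot_square_norm)
  have gxn: "g x = N0 *\<^sub>R n" using gx by (simp add: n_eq N0_def)
  have P: "tan_proj E x w = w - (w \<bullet> n) *\<^sub>R n" for w by (simp add: tan_proj_def n_def)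
  have Pn: "tan_proj E x w \<bullet> g x = 0" for w
    by (simp add: P gxn inner_diff_left nn)
  have PP: "tan_proj E x (tan_proj E x w) = tan_proj E x w" for w
  proof -
    have "tan_proj E x w \<bullet> n = 0" by (simp add: P inner_diff_left nn)
    then show ?thesis by (simp add: P[of "tan_proj E x w"])
  qed
  have DN: "((\<lambda>z. g z /\<^sub>R norm (g z)) has_derivative DNf x) (at x)" by (rule N_deriv[OF x(1)])
  have blDN: "bounded_linear (DNf x)" using DN by (rule has_derivative_bounded_linear)
  have linP: "linear (tan_proj E x)" by (rule tan_proj_linear)
  have blP: "bounded_linear (tan_proj E x)" using linP linear_conv_bounded_linear by blast
  define L0 where "L0 w = DNf x (tan_proj E x w)" for w
  have blL0: "bounded_linear L0" unfolding L0_def by (rule bounded_linear_compose[OF blDN blP])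
  obtain d3 where d30: "d3 > 0" and d3: "ball x d3 \<subseteq> U" using U_open x(1) openE by blast
  have on_eq: "outer_normal E y = g y /\<^sub>R norm (g y)" if "y \<in> frontier E" "norm (y - x) < d3" for y
  proof -
    have "y \<in> U" using d3 that by (auto simp: dist_norm norm_minus_commute)
    then show ?thesis using outer_normal_eq that by blast
  qed
  have on_x: "outer_normal E x = g x /\<^sub>R norm (g x)" using n_eq n_def by simp
  have DNwithin: "\<exists>d>0. \<forall>y\<in>frontier E. norm (y - x) < d \<longrightarrow>
      norm (outer_normal E y - outer_normal E x - DNf x (y - x)) \<le> e * norm (y - x)" if e0: "e > 0" for e
  proof -
    obtain d1 where d10: "d1 > 0" and d1: "\<And>y. norm (y - x) < d1 \<Longrightarrow>
        norm (g y /\<^sub>R norm (g y) - g x /\<^sub>R norm (g x) - DNf x (y - x)) \<le> e * norm (y - x)"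
      using DN e0 unfolding has_derivative_at_alt by blast
    show ?thesis
      by (rule exI[of _ "min d1 d3"]) (use d10 d30 d1 on_eq on_x in auto)
  qed
  have ex: "linear L0 \<and> (\<forall>v. L0 v = L0 (tan_proj E x v)) \<and> (outer_normal E has_derivative L0) (at x within frontier E)"
  proof (intro conjI allI)
    show "linear L0" using blL0 bounded_linear.linear by blast
    show "L0 v = L0 (tan_proj E x v)" for v by (simp add: L0_def PP)
    show "(outer_normal E has_derivative L0) (at x within frontier E)"
      unfolding has_derivative_within_alt
    proof (intro conjI allI impI blL0)
      fix e :: real assume e0: "e > 0"
      define K where "K = norm (DNf x n)"
      have K0: "K \<ge> 0" by (simp add: K_def)
      obtain d1 where d10: "d1 > 0" and d1: "\<forall>y\<in>frontier E. norm (y - x) < d1 \<longrightarrow>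
          norm (outer_normal E y - outer_normal E x - DNf x (y - x)) \<le> (e / 2) * norm (y - x)"
        using DNwithin[of "e / 2"] e0 by auto
      define e2 where "e2 = e * N0 / (2 * (K + 1))"
      have e20: "e2 > 0" using e0 N0 K0 by (simp add: e2_def)
      obtain d2 where d20: "d2 > 0" and d2: "\<And>y. norm (y - x) < d2 \<Longrightarrow>
          norm (\<phi> y - \<phi> x - g x \<bullet> (y - x)) \<le> e2 * norm (y - x)"
        using phi_deriv[OF x(1)] e20 unfolding has_derivative_at_alt by blast
      show "\<exists>d>0. \<forall>y\<in>frontier E. norm (y - x) < d \<longrightarrow>
          norm (outer_normal E y - outer_normal E x - L0 (y - x)) \<le> e * norm (y - x)"
      proof (intro exI[of _ "min d1 (min d2 d3)"] conjI ballI impI)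
        show "min d1 (min d2 d3) > 0" using d10 d20 d30 by simp
        fix y assume yF: "y \<in> frontier E" and yd: "norm (y - x) < min d1 (min d2 d3)"
        have yU: "y \<in> U" using d3 yd by (auto simp: dist_norm norm_minus_commute)
        have py: "\<phi> y = 0" using frontier_phi0[OF yU yF] .
        have px: "\<phi> x = 0" using frontier_phi0[OF x] .
        have "\<bar>g x \<bullet> (y - x)\<bar> \<le> e2 * norm (y - x)" using d2[of y] yd py px by simp
        then have "N0 * \<bar>n \<bullet> (y - x)\<bar> \<le> e2 * norm (y - x)" using N0 by (simp add: gxn abs_mult)
        then have "N0 * \<bar>n \<bullet> (y - x)\<bar> \<le> N0 * (e / (2 * (K + 1)) * norm (y - x))"
          by (simp add: e2_def mult.commute mult.left_commute)
        then have ny: "\<bar>n \<bullet> (y - x)\<bar> \<le> e / (2 * (K + 1)) * norm (y - x)"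
          by (rule mult_le_cancel_left_pos[OF N0, THEN iffD1])
        have L0y: "L0 (y - x) = DNf x (y - x) - ((y - x) \<bullet> n) *\<^sub>R DNf x n"
          unfolding L0_def P using linear_diff[OF bounded_linear.linear[OF blDN]]
            linear_scale[OF bounded_linear.linear[OF blDN]] by simp
        have "norm (outer_normal E y - outer_normal E x - L0 (y - x))
            \<le> norm (outer_normal E y - outer_normal E x - DNf x (y - x)) + norm (((y - x) \<bullet> n) *\<^sub>R DNf x n)"
          unfolding L0y by (rule order_trans[OF _ norm_triangle_ineq]) (simp add: algebra_simps)
        also have "\<dots> \<le> (e / 2) * norm (y - x) + (e / (2 * (K + 1)) * norm (y - x)) * K"
        proof (rule add_mono)
          show "norm (outer_normal E y - outer_normal E x - DNf x (y - x)) \<le> (e / 2) * norm (y - x)"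
            using d1 yF yd by auto
          show "norm (((y - x) \<bullet> n) *\<^sub>R DNf x n) \<le> (e / (2 * (K + 1)) * norm (y - x)) * K"
          proof -
            have "norm (((y - x) \<bullet> n) *\<^sub>R DNf x n) = \<bar>n \<bullet> (y - x)\<bar> * K"
              by (simp add: K_def inner_commute)
            also have "\<dots> \<le> (e / (2 * (K + 1)) * norm (y - x)) * K"
              by (rule mult_right_mono[OF ny K0])
            finally show ?thesis .
          qed
        qed
        also have "\<dots> \<le> e * norm (y - x)"
        proof -
          have "K / (K + 1) \<le> 1" using K0 by simp
          then have "(e / (2 * (K + 1)) * norm (y - x)) * K \<le> (e / 2) * norm (y - x)"
            using e0 K0 by (simp add: field_simps)
          then show ?thesis by linarith
        qed
        finally show "norm (outer_normal E y - outer_normal E x - L0 (y - x)) \<le> e * norm (y - x)" .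
      qed
    qed
  qed
  have uniq: "L w = L0 w" if hL: "linear L \<and> (\<forall>v. L v = L (tan_proj E x v)) \<and> (outer_normal E has_derivative L) (at x within frontier E)" for L w
  proof -
    have Lder: "(outer_normal E has_derivative L) (at x within frontier E)" using hL by blast
    have blL: "bounded_linear L" using Lder by (rule has_derivative_bounded_linear)
    define \<tau> where "\<tau> = tan_proj E x w"
    have tg: "g x \<bullet> \<tau> = 0" using Pn by (simp add: \<tau>_def inner_commute)
    define M where "M u = L u - DNf x u" for u
    have blM: "bounded_linear M" unfolding M_def by (rule bounded_linear_sub[OF blL blDN])
    have "M \<tau> = 0"
    proof (rule ccontr)
      assume "M \<tau> \<noteq> 0"
      define c where "c = norm (M \<tau>)"
      have c0: "c > 0" using \<open>M \<tau> \<noteq> 0\<close> by (simp add: c_def)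
      obtain KM where KM0: "KM > 0" and KM: "\<And>u. norm (M u) \<le> norm u * KM"
        using bounded_linear.pos_bounded[OF blM] by blast
      define \<eta> where "\<eta> = c / (4 * KM)"
      have eta0: "\<eta> > 0" using c0 KM0 by (simp add: \<eta>_def)
      have tpos: "norm \<tau> + \<eta> > 0" using eta0 by (simp add: add_nonneg_pos)
      define e where "e = c / (8 * (norm \<tau> + \<eta>))"
      have e0: "e > 0" using c0 tpos by (simp add: e_def)
      obtain dL where dL0: "dL > 0" and dL: "\<forall>y\<in>frontier E. norm (y - x) < dL \<longrightarrow>
          norm (outer_normal E y - outer_normal E x - L (y - x)) \<le> e * norm (y - x)"
        using Lder e0 unfolding has_derivative_within_alt by blast
      obtain dN where dN0: "dN > 0" and dN: "\<forall>y\<in>frontier E. norm (y - x) < dN \<longrightarrow>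
          norm (outer_normal E y - outer_normal E x - DNf x (y - x)) \<le> e * norm (y - x)"
        using DNwithin[OF e0] by blast
      have px: "\<phi> x = 0" using frontier_phi0[OF x] .
      obtain t0 where t00: "t0 > 0" and t0: "\<And>t. 0 < t \<Longrightarrow> t < t0 \<Longrightarrow> \<exists>q \<in> frontier E. norm (q - x - t *\<^sub>R \<tau>) \<le> \<eta> * t"
        using tangent_points[OF x(1) px tg eta0] by blast
      define t where "t = min (t0 / 2) (min dL dN / (2 * (norm \<tau> + \<eta>)))"
      have t_pos: "t > 0" using t00 dL0 dN0 tpos by (simp add: t_def)
      have "t \<le> t0 / 2" unfolding t_def by (rule min.cobounded1)
      then have tt0: "t < t0" using t00 by linarith
      have "t \<le> min dL dN / (2 * (norm \<tau> + \<eta>))" unfolding t_def by (rule min.cobounded2)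
      then have "t * (2 * (norm \<tau> + \<eta>)) \<le> min dL dN" using tpos by (simp add: le_divide_eq)
      moreover have "t * (norm \<tau> + \<eta>) > 0" using t_pos tpos by simp
      moreover have "t * (2 * (norm \<tau> + \<eta>)) = 2 * (t * (norm \<tau> + \<eta>))" by simp
      ultimately have tdl: "t * (norm \<tau> + \<eta>) < min dL dN" by linarith
      obtain q where qE: "q \<in> frontier E" and qn: "norm (q - x - t *\<^sub>R \<tau>) \<le> \<eta> * t"
        using t0[OF t_pos tt0] by blast
      have "norm (q - x) \<le> norm (t *\<^sub>R \<tau>) + norm (q - x - t *\<^sub>R \<tau>)"
        by (metis add.commute diff_add_cancel norm_triangle_ineq)
      also have "\<dots> \<le> t * norm \<tau> + \<eta> * t" using qn t_pos by simp
      finally have qp: "norm (q - x) \<le> t * (norm \<tau> + \<eta>)" by (simp add: algebra_simps)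
      have q1: "norm (q - x) < dL" and q2: "norm (q - x) < dN" using qp tdl by auto
      have "norm (M (q - x)) \<le> norm (outer_normal E q - outer_normal E x - DNf x (q - x))
          + norm (outer_normal E q - outer_normal E x - L (q - x))"
      proof -
        have "M (q - x) = (outer_normal E q - outer_normal E x - DNf x (q - x))
            - (outer_normal E q - outer_normal E x - L (q - x))" by (simp add: M_def)
        then show ?thesis by (metis norm_triangle_ineq4)
      qed
      also have "\<dots> \<le> e * norm (q - x) + e * norm (q - x)"
        using dL dN qE q1 q2 by (intro add_mono) auto
      also have "\<dots> \<le> 2 * e * (t * (norm \<tau> + \<eta>))" using qp e0 by (simp add: mult_left_mono)
      also have "\<dots> = t * c / 4" using tpos by (simp add: e_def field_simps)
      finally have m1: "norm (M (q - x)) \<le> t * c / 4" .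
      have linM: "M (q - x) = t *\<^sub>R M \<tau> + M (q - x - t *\<^sub>R \<tau>)"
      proof -
        have "M (q - x) = M (t *\<^sub>R \<tau> + (q - x - t *\<^sub>R \<tau>))" by simp
        also have "\<dots> = M (t *\<^sub>R \<tau>) + M (q - x - t *\<^sub>R \<tau>)"
          by (rule linear_add[OF bounded_linear.linear[OF blM]])
        also have "\<dots> = t *\<^sub>R M \<tau> + M (q - x - t *\<^sub>R \<tau>)"
          by (simp add: linear_scale[OF bounded_linear.linear[OF blM]])
        finally show ?thesis .
      qed
      have "norm (M (q - x - t *\<^sub>R \<tau>)) \<le> \<eta> * t * KM"
        using KM[of "q - x - t *\<^sub>R \<tau>"] qn KM0 by (smt (verit) mult_right_mono)
      also have "\<eta> * t * KM = t * c / 4" using KM0 by (simp add: \<eta>_def)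
      finally have m2: "norm (M (q - x - t *\<^sub>R \<tau>)) \<le> t * c / 4" .
      have "t * c = norm (t *\<^sub>R M \<tau>)" using t_pos by (simp add: c_def)
      also have "\<dots> \<le> norm (M (q - x)) + norm (M (q - x - t *\<^sub>R \<tau>))"
        using linM by (metis add_diff_cancel norm_triangle_ineq4)
      finally have "t * c \<le> t * c / 2" using m1 m2 by linarith
      moreover have "t * c > 0" using t_pos c0 by simp
      ultimately show False by linarith
    qed
    then have "L \<tau> = DNf x \<tau>" by (simp add: M_def)
    then show ?thesis using hL by (simp add: L0_def \<tau>_def)
  qed
  define Pr where "Pr L \<longleftrightarrow> linear L \<and> (\<forall>v. L v = L (tan_proj E x v))
      \<and> (outer_normal E has_derivative L) (at x within frontier E)" for L
  have sf: "second_fund E x = Eps Pr" unfolding second_fund_def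
    by (rule arg_cong[where f=Eps]) (simp add: fun_eq_iff Pr_def)
  have "Pr (Eps Pr)" using someI[of Pr L0] ex by (simp add: Pr_def)
  then have "second_fund E x v = L0 v" using uniq sf unfolding Pr_def by metis
  then show ?thesis by (simp add: L0_def)
qed

end

lemma ext_unfold:
  assumes "local_max_on F A x y \<or> local_min_on F A x y"
  obtains r where "r > 0" "x \<in> A" "y \<in> A"
    "(\<forall>x'\<in>A. \<forall>y'\<in>A. dist x' x < r \<and> dist y' y < r \<longrightarrow> F x' y' \<le> F x y)
     \<or> (\<forall>x'\<in>A. \<forall>y'\<in>A. dist x' x < r \<and> dist y' y < r \<longrightarrow> F x' y' \<ge> F x y)"
  using assms unfolding local_max_on_def local_min_on_def by blast

lemma S_le_iff:
  assumes "\<epsilon> > 0"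
  shows "S_fun E \<epsilon> x y \<le> s \<longleftrightarrow> (x - y) \<bullet> outer_normal E x - s * ((x - y) \<bullet> (x - y) + \<epsilon>) \<le> 0"
    and "S_fun E \<epsilon> x y \<ge> s \<longleftrightarrow> (x - y) \<bullet> outer_normal E x - s * ((x - y) \<bullet> (x - y) + \<epsilon>) \<ge> 0"
proof -
  have D: "(norm (x - y))\<^sup>2 + \<epsilon> > 0" using assms by (simp add: add_nonneg_pos)
  have nn: "(norm (x - y))\<^sup>2 = (x - y) \<bullet> (x - y)" by (simp add: dot_square_norm)
  show "S_fun E \<epsilon> x y \<le> s \<longleftrightarrow> (x - y) \<bullet> outer_normal E x - s * ((x - y) \<bullet> (x - y) + \<epsilon>) \<le> 0"
    using D unfolding S_fun_def nn by (simp add: pos_divide_le_eq)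
  show "S_fun E \<epsilon> x y \<ge> s \<longleftrightarrow> (x - y) \<bullet> outer_normal E x - s * ((x - y) \<bullet> (x - y) + \<epsilon>) \<ge> 0"
    using D unfolding S_fun_def nn by (simp add: pos_le_divide_eq)
qed

lemma S_self:
  assumes "\<epsilon> > 0"
  shows "(x - y) \<bullet> outer_normal E x - S_fun E \<epsilon> x y * ((x - y) \<bullet> (x - y) + \<epsilon>) = 0"
proof -
  have D: "(norm (x - y))\<^sup>2 + \<epsilon> > 0" using assms by (simp add: add_nonneg_pos)
  have nn: "(norm (x - y))\<^sup>2 = (x - y) \<bullet> (x - y)" by (simp add: dot_square_norm)
  show ?thesis using D unfolding S_fun_def nn by simp
qed

lemma orth_zero:
  fixes w n :: "'a::real_inner"
  assumes "n \<bullet> n = 1" "\<And>\<tau>. \<tau> \<bullet> n = 0 \<Longrightarrow> w \<bullet> \<tau> = 0"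
  shows "w - (w \<bullet> n) *\<^sub>R n = 0"
proof -
  define v where "v = w - (w \<bullet> n) *\<^sub>R n"
  have "v \<bullet> n = 0" using assms(1) by (simp add: v_def inner_diff_left)
  then have "w \<bullet> v = 0" using assms(2) by simp
  then have "v \<bullet> v = 0" using \<open>v \<bullet> n = 0\<close> by (simp add: v_def inner_diff_left inner_commute)
  then show ?thesis by (simp add: v_def)
qed

lemma claim2:
  fixes E :: "'a::euclidean_space set"
  assumes reg: "C2_regular E" and eps: "\<epsilon> > 0"
    and ext: "local_max_on (S_fun E \<epsilon>) (frontier E) x y \<or> local_min_on (S_fun E \<epsilon>) (frontier E) x y"
  shows "tan_proj E y (outer_normal E x) = (2 * S_fun E \<epsilon> x y) *\<^sub>R tan_proj E y (x - y)"
proof -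
  obtain r where r0: "r > 0" and xF: "x \<in> frontier E" and yF: "y \<in> frontier E"
    and mm: "(\<forall>x'\<in>frontier E. \<forall>y'\<in>frontier E. dist x' x < r \<and> dist y' y < r \<longrightarrow> S_fun E \<epsilon> x' y' \<le> S_fun E \<epsilon> x y)
     \<or> (\<forall>x'\<in>frontier E. \<forall>y'\<in>frontier E. dist x' x < r \<and> dist y' y < r \<longrightarrow> S_fun E \<epsilon> x' y' \<ge> S_fun E \<epsilon> x y)"
    using ext_unfold[OF ext] by blast
  obtain U \<phi> where "local_defining_fun E y U \<phi>" using reg yF unfolding C2_regular_def by blast
  then obtain g g' where L: "ldfd E U \<phi> g g'" and yU: "y \<in> U" by (rule ldf_obtain)
  interpret ldfd E U \<phi> g g' by (rule L)
  define s0 where "s0 = S_fun E \<epsilon> x y"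
  define nx where "nx = outer_normal E x"
  define f where "f z = (x - z) \<bullet> nx - s0 * ((x - z) \<bullet> (x - z) + \<epsilon>)" for z
  have fy: "f y = 0" using S_self[OF eps] by (simp add: f_def s0_def nx_def)
  have fle: "f z \<le> 0 \<longleftrightarrow> S_fun E \<epsilon> x z \<le> s0" and fge: "f z \<ge> 0 \<longleftrightarrow> S_fun E \<epsilon> x z \<ge> s0" for z
    using S_le_iff[where E=E and x=x and y=z and s=s0 and \<epsilon>=\<epsilon>] eps by (auto simp: f_def nx_def)
  have mx: "(\<forall>q\<in>frontier E. dist q y < r \<longrightarrow> f q \<le> f y) \<or> (\<forall>q\<in>frontier E. dist q y < r \<longrightarrow> f y \<le> f q)"
    using mm xF r0 fy fle fge by (auto simp: s0_def)
  have fd: "(f has_derivative (\<lambda>k. - (k \<bullet> nx) + 2 * s0 * ((x - y) \<bullet> k))) (at y)"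
    unfolding f_def
    by (auto intro!: derivative_eq_intros simp: fun_eq_iff inner_diff_right inner_diff_left inner_commute algebra_simps)
  have crit: "- (\<tau> \<bullet> nx) + 2 * s0 * ((x - y) \<bullet> \<tau>) = 0" if "g y \<bullet> \<tau> = 0" for \<tau>
    using crit_tangent[OF yU yF fd r0 mx that] .
  define w where "w = nx - (2 * s0) *\<^sub>R (x - y)"
  have ny: "outer_normal E y = g y /\<^sub>R norm (g y)" using outer_normal_eq[OF yU yF] .
  have gy: "g y \<noteq> 0" using g_nz yU by auto
  have nn: "outer_normal E y \<bullet> outer_normal E y = 1" using gy by (simp add: ny dot_square_norm)
  have "w - (w \<bullet> outer_normal E y) *\<^sub>R outer_normal E y = 0"
  proof (rule orth_zero[OF nn])
    fix \<tau> assume "\<tau> \<bullet> outer_normal E y = 0"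
    then have "g y \<bullet> \<tau> = 0" using gy by (simp add: ny inner_commute)
    then have "- (\<tau> \<bullet> nx) + 2 * s0 * ((x - y) \<bullet> \<tau>) = 0" by (rule crit)
    then show "w \<bullet> \<tau> = 0" by (simp add: w_def inner_diff_left inner_commute inner_diff_right)
  qed
  then have "tan_proj E y w = 0" by (simp add: tan_proj_def)
  moreover have "tan_proj E y w = tan_proj E y nx - (2 * s0) *\<^sub>R tan_proj E y (x - y)"
    unfolding w_def using linear_diff[OF tan_proj_linear] linear_scale[OF tan_proj_linear] by simp
  ultimately show ?thesis by (simp add: nx_def s0_def)
qed

lemma claim1:
  fixes E :: "'a::euclidean_space set"
  assumes reg: "C2_regular E" and eps: "\<epsilon> > 0"
    and ext: "local_max_on (S_fun E \<epsilon>) (frontier E) x y \<or> local_min_on (S_fun E \<epsilon>) (frontier E) x y"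
  shows "second_fund E x (x - y) = (2 * S_fun E \<epsilon> x y) *\<^sub>R tan_proj E x (x - y)"
proof -
  obtain r where r0: "r > 0" and xF: "x \<in> frontier E" and yF: "y \<in> frontier E"
    and mm: "(\<forall>x'\<in>frontier E. \<forall>y'\<in>frontier E. dist x' x < r \<and> dist y' y < r \<longrightarrow> S_fun E \<epsilon> x' y' \<le> S_fun E \<epsilon> x y)
     \<or> (\<forall>x'\<in>frontier E. \<forall>y'\<in>frontier E. dist x' x < r \<and> dist y' y < r \<longrightarrow> S_fun E \<epsilon> x' y' \<ge> S_fun E \<epsilon> x y)"
    using ext_unfold[OF ext] by blast
  obtain U \<phi> where "local_defining_fun E x U \<phi>" using reg xF unfolding C2_regular_def by blast
  then obtain g g' where L: "ldfd E U \<phi> g g'" and xU: "x \<in> U" by (rule ldf_obtain)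
  interpret ldfd E U \<phi> g g' by (rule L)
  obtain d3 where d30: "d3 > 0" and d3: "ball x d3 \<subseteq> U" using U_open xU openE by blast
  define \<delta> where "\<delta> = min r d3"
  have dl0: "\<delta> > 0" using r0 d30 by (simp add: \<delta>_def)
  define s0 where "s0 = S_fun E \<epsilon> x y"
  define Nf where "Nf z = g z /\<^sub>R norm (g z)" for z
  define F where "F z = (z - y) \<bullet> Nf z - s0 * ((z - y) \<bullet> (z - y) + \<epsilon>)" for z
  have onN: "outer_normal E z = Nf z" if "z \<in> frontier E" "dist z x < \<delta>" for z
  proof -
    have "z \<in> U" using d3 that by (auto simp: \<delta>_def dist_commute)
    then show ?thesis using outer_normal_eq that by (simp add: Nf_def)
  qed
  have Fx: "F x = 0" using S_self[OF eps, of x y E] onN[OF xF] dl0 by (simp add: F_def s0_def)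
  have Fle: "F z \<le> 0 \<longleftrightarrow> S_fun E \<epsilon> z y \<le> s0" and Fge: "F z \<ge> 0 \<longleftrightarrow> S_fun E \<epsilon> z y \<ge> s0"
    if "z \<in> frontier E" "dist z x < \<delta>" for z
    using S_le_iff[where E=E and x=z and y=y and s=s0 and \<epsilon>=\<epsilon>] eps onN[OF that]
    by (auto simp: F_def)
  have mx: "(\<forall>q\<in>frontier E. dist q x < \<delta> \<longrightarrow> F q \<le> F x) \<or> (\<forall>q\<in>frontier E. dist q x < \<delta> \<longrightarrow> F x \<le> F q)"
  proof -
    have dr: "dist q x < \<delta> \<Longrightarrow> dist q x < r" for q by (simp add: \<delta>_def)
    show ?thesis using mm yF r0 Fx Fle Fge dr by (auto simp: s0_def)
  qed
  have ND: "(Nf has_derivative DNf x) (at x)" unfolding Nf_def by (rule N_deriv[OF xU])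
  have Fd: "(F has_derivative (\<lambda>k. (x - y) \<bullet> DNf x k + k \<bullet> Nf x - s0 * (2 * ((x - y) \<bullet> k)))) (at x)"
    unfolding F_def
    by (auto intro!: derivative_eq_intros ND simp: fun_eq_iff inner_diff_right inner_diff_left inner_commute algebra_simps)
  have gx: "g x \<noteq> 0" using g_nz xU by auto
  have Nfx: "Nf x = outer_normal E x" using onN[OF xF] dl0 by simp
  define n where "n = outer_normal E x"
  have n_eq: "n = g x /\<^sub>R norm (g x)" using outer_normal_eq[OF xU xF] by (simp add: n_def)
  have nn: "n \<bullet> n = 1" using gx by (simp add: n_eq dot_square_norm)
  have gxn: "g x = norm (g x) *\<^sub>R n" using gx by (simp add: n_eq)
  have tg_iff: "\<tau> \<bullet> g x = 0 \<longleftrightarrow> \<tau> \<bullet> n = 0" for \<tau> using gx by (subst gxn) simp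
  have crit: "(x - y) \<bullet> DNf x \<tau> = 2 * s0 * ((x - y) \<bullet> \<tau>)" if "\<tau> \<bullet> n = 0" for \<tau>
  proof -
    have t1: "g x \<bullet> \<tau> = 0" using that tg_iff by (simp add: inner_commute)
    have "(x - y) \<bullet> DNf x \<tau> + \<tau> \<bullet> Nf x - s0 * (2 * ((x - y) \<bullet> \<tau>)) = 0"
      using crit_tangent[OF xU xF Fd dl0 mx t1] .
    moreover have "\<tau> \<bullet> Nf x = 0" using that Nfx by (simp add: n_def)
    ultimately show ?thesis by simp
  qed
  define u where "u = tan_proj E x (x - y)"
  have u_eq: "u = (x - y) - ((x - y) \<bullet> n) *\<^sub>R n" by (simp add: u_def tan_proj_def n_def)
  have un: "u \<bullet> n = 0" by (simp add: u_eq inner_diff_left nn)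
  have DNn: "n \<bullet> DNf x k = 0" for k using DN_normal[OF xU, of k] gx by (subst (asm) gxn) simp
  define v where "v = DNf x u - (2 * s0) *\<^sub>R u"
  have vn: "v \<bullet> n = 0" using DNn[of u] un by (simp add: v_def inner_diff_left inner_diff_right inner_commute)
  have key: "\<tau> \<bullet> v = 0" if t: "\<tau> \<bullet> n = 0" for \<tau>
  proof -
    have "\<tau> \<bullet> DNf x u = u \<bullet> DNf x \<tau>"
      using DN_sym[OF xU, of \<tau> u] t un tg_iff by simp
    also have "\<dots> = (x - y) \<bullet> DNf x \<tau>"
      using DNn[of \<tau>] by (simp add: u_eq inner_diff_left inner_diff_right inner_commute)
    also have "\<dots> = 2 * s0 * ((x - y) \<bullet> \<tau>)" using crit[OF t] .
    also have "\<dots> = 2 * s0 * (u \<bullet> \<tau>)" using t by (simp add: u_eq inner_diff_left inner_diff_right inner_commute)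
    finally show ?thesis by (simp add: v_def inner_diff_right inner_commute)
  qed
  have "v \<bullet> v = 0" using key[OF vn] .
  then have "v = 0" by simp
  then have "DNf x u = (2 * s0) *\<^sub>R u" by (simp add: v_def)
  moreover have "second_fund E x (x - y) = DNf x u" using second_fund_eq[OF xU xF] by (simp add: u_def)
  ultimately show ?thesis by (simp add: u_def s0_def)
qed

lemma squeeze_deriv:
  fixes f l u :: "'a::real_normed_vector \<Rightarrow> real"
  assumes lf: "\<And>y. l y \<le> f y" and fu: "\<And>y. f y \<le> u y" and eq: "l z = u z"
    and ld: "(l has_derivative L) (at z)" and ud: "(u has_derivative L) (at z)"
  shows "(f has_derivative L) (at z)"
  unfolding has_derivative_at_alt
proof (intro conjI allI impI)
  show "bounded_linear L" using ld by (rule has_derivative_bounded_linear)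
  fix e :: real assume e: "e > 0"
  obtain d1 where d10: "d1 > 0" and d1: "\<And>y. norm (y - z) < d1 \<Longrightarrow> norm (l y - l z - L (y - z)) \<le> e * norm (y - z)"
    using ld e unfolding has_derivative_at_alt by blast
  obtain d2 where d20: "d2 > 0" and d2: "\<And>y. norm (y - z) < d2 \<Longrightarrow> norm (u y - u z - L (y - z)) \<le> e * norm (y - z)"
    using ud e unfolding has_derivative_at_alt by blast
  have fz: "f z = l z" "f z = u z" using lf[of z] fu[of z] eq by auto
  show "\<exists>d>0. \<forall>y. norm (y - z) < d \<longrightarrow> norm (f y - f z - L (y - z)) \<le> e * norm (y - z)"
  proof (intro exI[of _ "min d1 d2"] conjI allI impI)
    show "min d1 d2 > 0" using d10 d20 by simp
    fix y assume y: "norm (y - z) < min d1 d2"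
    have a: "\<bar>l y - l z - L (y - z)\<bar> \<le> e * norm (y - z)" using d1 y by simp
    have b: "\<bar>u y - u z - L (y - z)\<bar> \<le> e * norm (y - z)" using d2 y by simp
    have "f y - f z - L (y - z) \<le> u y - u z - L (y - z)" using fu[of y] fz by simp
    moreover have "f y - f z - L (y - z) \<ge> l y - l z - L (y - z)" using lf[of y] fz by simp
    ultimately show "norm (f y - f z - L (y - z)) \<le> e * norm (y - z)" using a b by (simp add: abs_le_iff)
  qed
qed

lemma norm_diff_deriv:
  fixes p z :: "'a::real_inner"
  assumes "z \<noteq> p"
  shows "((\<lambda>y. norm (y - p)) has_derivative (\<lambda>k. ((z - p) /\<^sub>R norm (z - p)) \<bullet> k)) (at z)"
proof -
  have "z - p \<noteq> 0" using assms by simp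
  from has_derivative_compose[OF has_derivative_diff[OF has_derivative_ident has_derivative_const] has_derivative_norm[OF this]]
  show ?thesis by (simp add: sgn_div_norm inner_commute)
qed

lemma infdist_geI:
  assumes "C \<noteq> {}" "\<And>a. a \<in> C \<Longrightarrow> b \<le> dist y a"
  shows "b \<le> infdist y C"
  unfolding infdist_notempty[OF assms(1)] by (rule cINF_greatest) (use assms in auto)

lemma touching:
  fixes C :: "'a::euclidean_space set"
  assumes D: "((\<lambda>y. infdist y C) has_derivative D') (at w)"
    and p: "p \<in> C" and dp: "dist w p = infdist w C" and wp: "w \<noteq> p"
  shows "D' = (\<lambda>k. ((w - p) /\<^sub>R norm (w - p)) \<bullet> k)"
proof -
  have h: "((\<lambda>y. norm (y - p) - infdist y C) has_derivative (\<lambda>k. ((w - p) /\<^sub>R norm (w - p)) \<bullet> k - D' k)) (at w)"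
    by (rule has_derivative_diff[OF norm_diff_deriv[OF wp] D])
  have "\<forall>\<^sub>F y in at w. norm (w - p) - infdist w C \<le> norm (y - p) - infdist y C"
    using dp infdist_le[OF p] by (auto simp: dist_norm intro!: always_eventually)
  from has_derivative_local_min[OF h this]
  have "(\<lambda>k. ((w - p) /\<^sub>R norm (w - p)) \<bullet> k - D' k) = (\<lambda>h. 0)" .
  then show ?thesis by (auto simp: fun_eq_iff dest: fun_cong)
qed

lemma infdist_closure_eq: "infdist y (closure A) = infdist y A"
proof (cases "A = {}")
  case True then show ?thesis by simp
next
  case False
  show ?thesis
  proof (rule antisym)
    show "infdist y (closure A) \<le> infdist y A" using infdist_mono[OF closure_subset False] .
    show "infdist y A \<le> infdist y (closure A)"
    proof (rule infdist_geI)
      show "closure A \<noteq> {}" using False by simp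
      fix a assume "a \<in> closure A"
      then have "infdist a A = 0" using in_closure_iff_infdist_zero[OF False] by simp
      then show "infdist y A \<le> dist y a" using infdist_triangle[of y A a] by simp
    qed
  qed
qed

lemma dist_diff_bound:
  fixes c :: "'a::euclidean_space"
  assumes bA: "ball c t \<subseteq> A" and bB: "ball c t \<inter> B = {}" and Bne: "B \<noteq> {}" and t0: "t > 0"
  shows "infdist y A - infdist y B \<le> norm (y - c) - t"
proof (cases "norm (y - c) < t")
  case True
  then have "y \<in> A" using bA by (auto simp: dist_norm norm_minus_commute)
  then have iA: "infdist y A = 0" by simp
  have "t - norm (y - c) \<le> infdist y B"
  proof (rule infdist_geI[OF Bne])
    fix b assume "b \<in> B"
    then have "b \<notin> ball c t" using bB by auto
    then have "t \<le> dist c b" by simp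
    moreover have "dist c b \<le> dist c y + dist y b" by (rule dist_triangle)
    ultimately show "t - norm (y - c) \<le> dist y b" by (simp add: dist_norm norm_minus_commute)
  qed
  then show ?thesis using iA by simp
next
  case False
  define m where "m = norm (y - c)"
  have mt: "m \<ge> t" using False by (simp add: m_def)
  have m0: "m > 0" using mt t0 by simp
  define a where "a = c + (t / m) *\<^sub>R (y - c)"
  have "dist c a = t" using m0 t0 by (simp add: a_def dist_norm m_def)
  then have "a \<in> cball c t" by simp
  then have "a \<in> closure A" using closure_mono[OF bA] t0 by auto
  moreover have Ane: "A \<noteq> {}" using bA t0 by (metis centre_in_ball empty_iff subsetD)
  ultimately have ia: "infdist a A = 0" using in_closure_iff_infdist_zero by blast
  have "y - a = (1 - t / m) *\<^sub>R (y - c)" by (simp add: a_def algebra_simps)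
  then have "dist y a = (1 - t / m) * m" using m0 mt by (simp add: dist_norm m_def)
  also have "\<dots> = m - t" using m0 by (simp add: field_simps)
  finally have "infdist y A \<le> m - t" using infdist_triangle[of y A a] ia by simp
  then show ?thesis using infdist_nonneg[of y B] by (simp add: m_def)
qed

lemma GT:
  fixes C :: "'a::euclidean_space set"
  assumes p: "p \<in> C" and zp: "z - p = Dz *\<^sub>R u" and u1: "norm u = 1" and D0: "0 < Dz" and Dt: "Dz < t"
    and ball: "ball (p + t *\<^sub>R u) t \<inter> C = {}" and iz: "infdist z C = Dz"
  shows "((\<lambda>y. infdist y C) has_derivative (\<lambda>k. u \<bullet> k)) (at z)"
proof -
  define c where "c = p + t *\<^sub>R u"
  have t0: "t > 0" using D0 Dt by simp
  have lo: "t - norm (y - c) \<le> infdist y C" for y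
  proof (rule infdist_geI)
    show "C \<noteq> {}" using p by auto
    fix a assume "a \<in> C"
    then have "a \<notin> ball c t" using ball by (auto simp: c_def)
    then have "t \<le> dist c a" by simp
    moreover have "dist c a \<le> dist c y + dist y a" by (rule dist_triangle)
    ultimately show "t - norm (y - c) \<le> dist y a" by (simp add: dist_norm norm_minus_commute)
  qed
  have up: "infdist y C \<le> norm (y - p)" for y using infdist_le[OF p, of y] by (simp add: dist_norm)
  have zc: "z - c = (Dz - t) *\<^sub>R u" using zp by (simp add: c_def algebra_simps)
  have nzc: "norm (z - c) = t - Dz" using zc u1 Dt by simp
  have nzp: "norm (z - p) = Dz" using zp u1 D0 by simp
  have eq: "t - norm (z - c) = norm (z - p)" using nzc nzp by simp
  have zne1: "z \<noteq> p" using nzp D0 by auto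
  have zne2: "z \<noteq> c" using nzc Dt by auto
  have d1: "((\<lambda>y. norm (y - p)) has_derivative (\<lambda>k. u \<bullet> k)) (at z)"
    using norm_diff_deriv[OF zne1] zp nzp D0 by simp
  have d2: "((\<lambda>y. t - norm (y - c)) has_derivative (\<lambda>k. u \<bullet> k)) (at z)"
  proof -
    have "((\<lambda>y. t - norm (y - c)) has_derivative (\<lambda>k. 0 - ((z - c) /\<^sub>R norm (z - c)) \<bullet> k)) (at z)"
      by (rule has_derivative_diff[OF has_derivative_const norm_diff_deriv[OF zne2]])
    moreover have "(\<lambda>k. 0 - ((z - c) /\<^sub>R norm (z - c)) \<bullet> k) = (\<lambda>k. u \<bullet> k)"
    proof -
      have "(z - c) /\<^sub>R norm (z - c) = ((Dz - t) / (t - Dz)) *\<^sub>R u" using zc nzc by (simp add: divide_inverse mult.commute)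
      moreover have "(Dz - t) / (t - Dz) = -1" using Dt by (simp add: field_simps)
      ultimately have "(z - c) /\<^sub>R norm (z - c) = - u" by simp
      then show ?thesis by (auto simp: fun_eq_iff)
    qed
    ultimately show ?thesis by simp
  qed
  show ?thesis by (rule squeeze_deriv[OF lo up eq d2 d1])
qed

lemma GT0:
  fixes E :: "'a::euclidean_space set"
  assumes n1: "norm n = 1" and t0: "t > 0"
    and bin: "ball (z - t *\<^sub>R n) t \<subseteq> E" and bout: "ball (z + t *\<^sub>R n) t \<inter> E = {}"
  shows "(signed_dist E has_derivative (\<lambda>k. n \<bullet> k)) (at z)"
proof -
  define cm where "cm = z - t *\<^sub>R n"
  define cp where "cp = z + t *\<^sub>R n"
  have cmE: "cm \<in> E" using bin t0 by (auto simp: cm_def)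
  have "cp \<in> ball cp t" using t0 by simp
  then have cpE: "cp \<notin> E" using bout unfolding cp_def by blast
  have up: "signed_dist E y \<le> norm (y - cm) - t" for y
    unfolding signed_dist_def
    by (rule dist_diff_bound) (use bin cpE t0 in \<open>auto simp: cm_def\<close>)
  have lo': "infdist y (- E) - infdist y E \<le> norm (y - cp) - t" for y
    by (rule dist_diff_bound) (use bout cmE t0 in \<open>auto simp: cp_def\<close>)
  have lo: "t - norm (y - cp) \<le> signed_dist E y" for y
    using lo'[of y] by (simp add: signed_dist_def)
  have zm: "z - cm = t *\<^sub>R n" by (simp add: cm_def)
  have zp: "z - cp = - (t *\<^sub>R n)" by (simp add: cp_def)
  have eq: "t - norm (z - cp) = norm (z - cm) - t" using zm zp n1 t0 by simp
  have ne1: "z \<noteq> cm" using zm n1 t0 by auto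
  have ne2: "z \<noteq> cp" using zp n1 t0 by auto
  have d1: "((\<lambda>y. norm (y - cm) - t) has_derivative (\<lambda>k. n \<bullet> k)) (at z)"
  proof -
    have "((\<lambda>y. norm (y - cm) - t) has_derivative (\<lambda>k. ((z - cm) /\<^sub>R norm (z - cm)) \<bullet> k - 0)) (at z)"
      by (rule has_derivative_diff[OF norm_diff_deriv[OF ne1] has_derivative_const])
    then show ?thesis using zm n1 t0 by simp
  qed
  have d2: "((\<lambda>y. t - norm (y - cp)) has_derivative (\<lambda>k. n \<bullet> k)) (at z)"
  proof -
    have "((\<lambda>y. t - norm (y - cp)) has_derivative (\<lambda>k. 0 - ((z - cp) /\<^sub>R norm (z - cp)) \<bullet> k)) (at z)"
      by (rule has_derivative_diff[OF has_derivative_const norm_diff_deriv[OF ne2]])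
    then show ?thesis using zp n1 t0 by simp
  qed
  show ?thesis by (rule squeeze_deriv[OF lo up eq d2 d1])
qed

context ldfd
begin

lemma g_lipschitz:
  assumes bU: "ball x \<rho> \<subseteq> U" and M: "\<And>z. z \<in> ball x \<rho> \<Longrightarrow> norm (g' z) \<le> M"
    and z1: "z1 \<in> ball x \<rho>" and z2: "z2 \<in> ball x \<rho>"
  shows "norm (g z1 - g z2) \<le> M * norm (z1 - z2)"
proof (rule differentiable_bound[where f'="\<lambda>z. blinfun_apply (g' z)"])
  show "convex (ball x \<rho>)" by simp
  show "(g has_derivative blinfun_apply (g' z)) (at z within ball x \<rho>)" if "z \<in> ball x \<rho>" for z
  proof -
    have "z \<in> U" using that bU by auto
    then show ?thesis using has_derivative_at_withinI[OF g_deriv] by blast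
  qed
  show "\<And>z. z \<in> ball x \<rho> \<Longrightarrow> onorm (blinfun_apply (g' z)) \<le> M"
  proof -
    fix z assume z: "z \<in> ball x \<rho>"
    show "onorm (blinfun_apply (g' z)) \<le> M"
    proof (rule onorm_le)
      fix h
      have "norm (blinfun_apply (g' z) h) \<le> norm (g' z) * norm h" by (rule norm_blinfun)
      also have "\<dots> \<le> M * norm h" using M[OF z] by (simp add: mult_right_mono)
      finally show "norm (blinfun_apply (g' z) h) \<le> M * norm h" .
    qed
  qed
qed (use z1 z2 in auto)

lemma taylor_bound:
  assumes bU: "ball q \<rho> \<subseteq> U"
    and Lip: "\<And>z1 z2. z1 \<in> ball q \<rho> \<Longrightarrow> z2 \<in> ball q \<rho> \<Longrightarrow> norm (g z1 - g z2) \<le> M * norm (z1 - z2)"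
    and k: "norm k < \<rho>" and M0: "M \<ge> 0"
  shows "\<bar>\<phi> (q + k) - \<phi> q - g q \<bullet> k\<bar> \<le> M * norm k * norm k"
proof -
  define \<psi> where "\<psi> z = \<phi> z - g q \<bullet> z" for z
  have S: "cball q (norm k) \<subseteq> ball q \<rho>" using k by auto
  have "norm (\<psi> (q + k) - \<psi> q) \<le> (M * norm k) * norm (q + k - q)"
  proof (rule differentiable_bound[where f'="\<lambda>z h. g z \<bullet> h - g q \<bullet> h" and S="cball q (norm k)"])
    show "convex (cball q (norm k))" by simp
    show "(\<psi> has_derivative (\<lambda>h. g z \<bullet> h - g q \<bullet> h)) (at z within cball q (norm k))"
      if "z \<in> cball q (norm k)" for z
    proof -
      have zU: "z \<in> U" using that S bU by auto
      have "(\<psi> has_derivative (\<lambda>h. g z \<bullet> h - g q \<bullet> h)) (at z)"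
        unfolding \<psi>_def by (intro has_derivative_diff phi_deriv zU has_derivative_inner_right has_derivative_ident)
      then show ?thesis by (rule has_derivative_at_withinI)
    qed
    show "onorm (\<lambda>h. g z \<bullet> h - g q \<bullet> h) \<le> M * norm k" if "z \<in> cball q (norm k)" for z
    proof (rule onorm_le)
      fix h
      have zq: "norm (z - q) \<le> norm k" using that by (simp add: dist_norm norm_minus_commute)
      have zb: "z \<in> ball q \<rho>" using that S by auto
      have qb: "q \<in> ball q \<rho>" using k norm_ge_zero[of k] by (simp del: norm_ge_zero)
      have "norm (g z \<bullet> h - g q \<bullet> h) = \<bar>(g z - g q) \<bullet> h\<bar>" by (simp add: inner_diff_left)
      also have "\<dots> \<le> norm (g z - g q) * norm h" by (rule Cauchy_Schwarz_ineq2)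
      also have "\<dots> \<le> (M * norm (z - q)) * norm h"
        using Lip[OF zb qb] by (intro mult_right_mono) auto
      also have "\<dots> \<le> (M * norm k) * norm h" using zq M0 by (intro mult_right_mono mult_left_mono) auto
      finally show "norm (g z \<bullet> h - g q \<bullet> h) \<le> M * norm k * norm h" .
    qed
  qed (auto simp: dist_norm)
  moreover have "\<psi> (q + k) - \<psi> q = \<phi> (q + k) - \<phi> q - g q \<bullet> k" by (simp add: \<psi>_def inner_add_right)
  ultimately show ?thesis by simp
qed

lemma side_ball:
  assumes bU: "ball q \<rho> \<subseteq> U"
    and Lip: "\<And>z1 z2. z1 \<in> ball q \<rho> \<Longrightarrow> z2 \<in> ball q \<rho> \<Longrightarrow> norm (g z1 - g z2) \<le> M * norm (z1 - z2)"
    and M0: "M > 0" and q0: "\<phi> q = 0"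
    and sg: "\<bar>\<sigma>\<bar> = 1" and s0: "s > 0" and s\<rho>: "2 * s \<le> \<rho>" and sM: "2 * s * M \<le> norm (g q)"
    and y: "y \<in> ball (q - s *\<^sub>R (\<sigma> *\<^sub>R (g q /\<^sub>R norm (g q)))) s"
  shows "\<sigma> * \<phi> y < 0"
proof -
  have "2 * s * M > 0" using s0 M0 by simp
  then have gq: "g q \<noteq> 0" using sM by auto
  define w where "w = \<sigma> *\<^sub>R (g q /\<^sub>R norm (g q))"
  have w1: "norm w = 1" using sg gq by (simp add: w_def abs_mult)
  have sgw: "\<sigma> *\<^sub>R g q = norm (g q) *\<^sub>R w" using sg gq by (simp add: w_def)
  define k where "k = y - q"
  have ks: "norm (k + s *\<^sub>R w) < s" using y by (simp add: k_def w_def dist_norm norm_minus_commute algebra_simps)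
  have kne: "k \<noteq> 0" using ks w1 s0 by auto
  have "norm k \<le> norm (k + s *\<^sub>R w) + norm (s *\<^sub>R w)" by (metis add_diff_cancel norm_triangle_ineq4)
  then have k2: "norm k < 2 * s" using ks w1 s0 by simp
  have "(norm (k + s *\<^sub>R w))\<^sup>2 < s\<^sup>2" using ks by (simp add: power_strict_mono)
  moreover have "(norm (k + s *\<^sub>R w))\<^sup>2 = (norm k)\<^sup>2 + 2 * s * (k \<bullet> w) + s\<^sup>2"
  proof -
    have ww: "w \<bullet> w = 1" using w1 by (simp add: power2_norm_eq_inner[symmetric])
    have "(norm (k + s *\<^sub>R w))\<^sup>2 = (k + s *\<^sub>R w) \<bullet> (k + s *\<^sub>R w)" by (simp add: power2_norm_eq_inner)
    also have "\<dots> = k \<bullet> k + 2 * s * (k \<bullet> w) + s * s * (w \<bullet> w)"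
      by (simp add: inner_add_left inner_add_right inner_commute algebra_simps)
    also have "\<dots> = (norm k)\<^sup>2 + 2 * s * (k \<bullet> w) + s\<^sup>2" using ww by (simp add: dot_square_norm power2_eq_square)
    finally show ?thesis .
  qed
  ultimately have kw: "2 * s * (k \<bullet> w) < - (norm k)\<^sup>2" by simp
  have tb: "\<bar>\<phi> (q + k) - \<phi> q - g q \<bullet> k\<bar> \<le> M * norm k * norm k"
    by (rule taylor_bound[OF bU Lip]) (use k2 s\<rho> M0 in auto)
  have "\<sigma> * \<phi> y = \<sigma> * (\<phi> (q + k) - \<phi> q - g q \<bullet> k) + (\<sigma> *\<^sub>R g q) \<bullet> k"
    using q0 by (simp add: k_def algebra_simps)
  also have "\<dots> \<le> M * norm k * norm k + norm (g q) * (k \<bullet> w)"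
  proof -
    have "\<sigma> * (\<phi> (q + k) - \<phi> q - g q \<bullet> k) \<le> \<bar>\<sigma> * (\<phi> (q + k) - \<phi> q - g q \<bullet> k)\<bar>" by simp
    also have "\<dots> = \<bar>\<phi> (q + k) - \<phi> q - g q \<bullet> k\<bar>" using sg by (simp add: abs_mult)
    finally show ?thesis using tb sgw by (simp add: inner_commute)
  qed
  also have "\<dots> < 0"
  proof -
    have nk0: "norm k > 0" using kne by simp
    have gp: "norm (g q) > 0" using gq by simp
    have "norm (g q) * (2 * s * (k \<bullet> w)) < norm (g q) * (- (norm k)\<^sup>2)"
      by (rule mult_strict_left_mono[OF kw gp])
    then have "2 * s * (norm (g q) * (k \<bullet> w)) < - norm (g q) * (norm k)\<^sup>2"
      by (simp add: algebra_simps)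
    moreover have "2 * s * (M * norm k * norm k) \<le> norm (g q) * (norm k)\<^sup>2"
      using sM nk0 by (simp add: power2_eq_square mult.assoc[symmetric] mult_right_mono)
    ultimately have "2 * s * (M * norm k * norm k + norm (g q) * (k \<bullet> w)) < 0"
      by (simp add: distrib_left)
    then show ?thesis using s0 by (simp add: mult_less_0_iff)
  qed
  finally show ?thesis .
qed

end

context ldfd
begin

lemma local_balls:
  assumes x: "x \<in> U" "x \<in> frontier E"
  shows "\<exists>\<rho>>0. \<exists>t>0. \<forall>q\<in>frontier E. dist q x < \<rho> \<longrightarrow> (\<forall>s. 0 < s \<longrightarrow> s \<le> t \<longrightarrow>
     ball (q - s *\<^sub>R outer_normal E q) s \<subseteq> E \<and> ball (q + s *\<^sub>R outer_normal E q) s \<inter> closure E = {})"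
proof -
  obtain \<rho>1 where \<rho>10: "\<rho>1 > 0" and \<rho>1: "\<forall>z\<in>U. dist z x < \<rho>1 \<longrightarrow> dist (g' z) (g' x) < 1"
    using g'_cont x(1) unfolding continuous_on_iff by (meson zero_less_one)
  obtain \<rho>2 where \<rho>20: "\<rho>2 > 0" and \<rho>2: "ball x \<rho>2 \<subseteq> U" using U_open x(1) openE by blast
  define \<rho> where "\<rho> = min \<rho>1 \<rho>2"
  have \<rho>0: "\<rho> > 0" using \<rho>10 \<rho>20 by (simp add: \<rho>_def)
  have bU: "ball x \<rho> \<subseteq> U" using \<rho>2 by (auto simp: \<rho>_def)
  define M where "M = norm (g' x) + 1"
  have M0: "M > 0" by (simp add: M_def add_nonneg_pos)
  have Mb: "norm (g' z) \<le> M" if "z \<in> ball x \<rho>" for z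
  proof -
    have "z \<in> U" using that bU by auto
    moreover have "dist z x < \<rho>1" using that by (simp add: \<rho>_def dist_commute)
    ultimately have "dist (g' z) (g' x) < 1" using \<rho>1 by blast
    then have "norm (g' z - g' x) < 1" by (simp add: dist_norm)
    moreover have "norm (g' z) \<le> norm (g' x) + norm (g' z - g' x)"
      by (metis add_diff_cancel_left' norm_triangle_ineq add.commute diff_add_cancel)
    ultimately show ?thesis by (simp add: M_def)
  qed
  have Lip: "norm (g z1 - g z2) \<le> M * norm (z1 - z2)" if "z1 \<in> ball x \<rho>" "z2 \<in> ball x \<rho>" for z1 z2
    by (rule g_lipschitz[OF bU Mb that])
  define \<gamma> where "\<gamma> = norm (g x)"
  have \<gamma>0: "\<gamma> > 0" using g_nz x(1) by (simp add: \<gamma>_def)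
  define \<rho>' where "\<rho>' = min (\<rho> / 2) (\<gamma> / (2 * M))"
  define t where "t = min (\<rho> / 4) (\<gamma> / (4 * M))"
  have \<rho>'0: "\<rho>' > 0" using \<rho>0 \<gamma>0 M0 by (simp add: \<rho>'_def)
  have t0: "t > 0" using \<rho>0 \<gamma>0 M0 by (simp add: t_def)
  have main: "ball (q - s *\<^sub>R outer_normal E q) s \<subseteq> E \<and> ball (q + s *\<^sub>R outer_normal E q) s \<inter> closure E = {}"
    if qF: "q \<in> frontier E" and qx: "dist q x < \<rho>'" and s0: "0 < s" and st: "s \<le> t" for q s
  proof -
    have qx1: "dist q x < \<rho> / 2" and qx2: "dist q x < \<gamma> / (2 * M)" using qx by (auto simp: \<rho>'_def)
    have qb: "q \<in> ball x \<rho>" using qx1 \<rho>0 by (simp add: dist_commute)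
    have qU: "q \<in> U" using qb bU by auto
    have q0: "\<phi> q = 0" using frontier_phi0[OF qU qF] .
    have xb: "x \<in> ball x \<rho>" using \<rho>0 by simp
    have "norm (g x) \<le> norm (g q) + norm (g x - g q)"
      by (metis add.commute diff_add_cancel norm_triangle_ineq)
    moreover have "norm (g x - g q) \<le> M * norm (x - q)" by (rule Lip[OF xb qb])
    moreover have "M * norm (x - q) < \<gamma> / 2"
    proof -
      have "norm (x - q) < \<gamma> / (2 * M)" using qx2 by (simp add: dist_norm norm_minus_commute)
      then have "norm (x - q) * (2 * M) < \<gamma>" using M0 by (simp add: pos_less_divide_eq)
      moreover have "M * norm (x - q) * 2 = norm (x - q) * (2 * M)" by simp
      ultimately show ?thesis by linarith
    qed
    ultimately have gq: "norm (g q) > \<gamma> / 2" by (simp add: \<gamma>_def)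
    have bq: "ball q (\<rho> / 2) \<subseteq> ball x \<rho>"
    proof
      fix z assume "z \<in> ball q (\<rho> / 2)"
      then have "dist q z < \<rho> / 2" by simp
      moreover have "dist x z \<le> dist x q + dist q z" by (rule dist_triangle)
      ultimately show "z \<in> ball x \<rho>" using qx1 by (simp add: dist_commute)
    qed
    have bqU: "ball q (\<rho> / 2) \<subseteq> U" using bq bU by auto
    have Lipq: "norm (g z1 - g z2) \<le> M * norm (z1 - z2)" if "z1 \<in> ball q (\<rho> / 2)" "z2 \<in> ball q (\<rho> / 2)" for z1 z2
      using Lip[of z1 z2] that bq by blast
    have s\<rho>: "2 * s \<le> \<rho> / 2" using st by (simp add: t_def)
    have sM: "2 * s * M \<le> norm (g q)"
    proof -
      have "s \<le> \<gamma> / (4 * M)" using st by (simp add: t_def)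
      then have "s * (4 * M) \<le> \<gamma>" using M0 by (simp add: le_divide_eq)
      then show ?thesis using gq by linarith
    qed
    have nq: "outer_normal E q = g q /\<^sub>R norm (g q)" using outer_normal_eq[OF qU qF] .
    have near: "y \<in> ball q (\<rho> / 2)" if "y \<in> ball (q + s *\<^sub>R v) s" "norm v = 1" for y v
    proof -
      have "dist q y \<le> dist q (q + s *\<^sub>R v) + dist (q + s *\<^sub>R v) y" by (rule dist_triangle)
      moreover have "dist q (q + s *\<^sub>R v) = s" using that(2) s0 by (simp add: dist_norm)
      ultimately have "dist q y < 2 * s" using that(1) by simp
      then show ?thesis using s\<rho> by simp
    qed
    have "norm (g q) > 0" using gq \<gamma>0 by linarith
    then have n1: "norm (g q /\<^sub>R norm (g q)) = 1" by simp
    have A: "ball (q - s *\<^sub>R outer_normal E q) s \<subseteq> E"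
    proof
      fix y assume y: "y \<in> ball (q - s *\<^sub>R outer_normal E q) s"
      have y': "y \<in> ball (q - s *\<^sub>R ((1::real) *\<^sub>R (g q /\<^sub>R norm (g q)))) s" using y nq by simp
      have "1 * \<phi> y < 0" by (rule side_ball[OF bqU Lipq M0 q0 _ s0 s\<rho> sM y']) simp_all
      moreover have "y \<in> ball q (\<rho> / 2)"
        using near[of y "- (g q /\<^sub>R norm (g q))"] y nq n1 by (simp add: algebra_simps)
      ultimately show "y \<in> E" using EU_iff bqU by auto
    qed
    have B: "ball (q + s *\<^sub>R outer_normal E q) s \<inter> closure E = {}"
    proof (rule ccontr)
      assume "ball (q + s *\<^sub>R outer_normal E q) s \<inter> closure E \<noteq> {}"
      then obtain y where y: "y \<in> ball (q + s *\<^sub>R outer_normal E q) s" and yc: "y \<in> closure E" by blast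
      have y': "y \<in> ball (q - s *\<^sub>R ((-1::real) *\<^sub>R (g q /\<^sub>R norm (g q)))) s" using y nq by simp
      have "(-1) * \<phi> y < 0" by (rule side_ball[OF bqU Lipq M0 q0 _ s0 s\<rho> sM y']) simp_all
      moreover have "y \<in> ball q (\<rho> / 2)" using near[of y "g q /\<^sub>R norm (g q)"] y nq n1 by simp
      ultimately show False using pos_not_closure[of y] yc bqU by auto
    qed
    show ?thesis using A B by blast
  qed
  show ?thesis using main \<rho>'0 t0 by blast
qed

end

lemma uniform_balls:
  fixes E :: "'a::euclidean_space set"
  assumes bE: "bounded E" and reg: "C2_regular E"
  shows "\<exists>t0>0. \<forall>q\<in>frontier E. \<forall>s. 0 < s \<longrightarrow> s \<le> t0 \<longrightarrow>
     ball (q - s *\<^sub>R outer_normal E q) s \<subseteq> E \<and> ball (q + s *\<^sub>R outer_normal E q) s \<inter> closure E = {}"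
proof -
  define P where "P q t \<longleftrightarrow> (\<forall>s. 0 < s \<longrightarrow> s \<le> t \<longrightarrow>
     ball (q - s *\<^sub>R outer_normal E q) s \<subseteq> E \<and> ball (q + s *\<^sub>R outer_normal E q) s \<inter> closure E = {})" for q t
  have Pmono: "P q t \<Longrightarrow> t' \<le> t \<Longrightarrow> P q t'" for q t t' unfolding P_def by auto
  have loc: "\<forall>x\<in>frontier E. \<exists>\<rho>>0. \<exists>t>0. \<forall>q\<in>frontier E. dist q x < \<rho> \<longrightarrow> P q t"
  proof
    fix x assume xF: "x \<in> frontier E"
    obtain U \<phi> where "local_defining_fun E x U \<phi>" using reg xF unfolding C2_regular_def by blast
    then obtain g g' where L: "ldfd E U \<phi> g g'" and xU: "x \<in> U" by (rule ldf_obtain)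
    show "\<exists>\<rho>>0. \<exists>t>0. \<forall>q\<in>frontier E. dist q x < \<rho> \<longrightarrow> P q t"
      using ldfd.local_balls[OF L xU xF] unfolding P_def by blast
  qed
  then obtain \<rho> T where \<rho>T: "\<forall>x\<in>frontier E. \<rho> x > 0 \<and> T x > 0 \<and> (\<forall>q\<in>frontier E. dist q x < \<rho> x \<longrightarrow> P q (T x))"
    by metis
  show ?thesis
  proof (cases "frontier E = {}")
    case True then show ?thesis by (intro exI[of _ 1]) auto
  next
    case False
    have cF: "compact (frontier E)" using bE by (rule compact_frontier_bounded)
    have cov: "frontier E \<subseteq> (\<Union>x\<in>frontier E. ball x (\<rho> x))" using \<rho>T by force
    obtain F' where F'F: "F' \<subseteq> frontier E" and fin: "finite F'" and cov': "frontier E \<subseteq> (\<Union>x\<in>F'. ball x (\<rho> x))"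
      using compactE_image[OF cF _ cov] by blast
    have F'ne: "F' \<noteq> {}" using cov' False by auto
    define t0 where "t0 = Min (T ` F')"
    have t00: "t0 > 0" unfolding t0_def using fin F'ne F'F \<rho>T by (auto simp: Min_gr_iff)
    show ?thesis
    proof (intro exI[of _ t0] conjI t00 ballI)
      fix q assume qF: "q \<in> frontier E"
      then obtain x where xF': "x \<in> F'" and qx: "q \<in> ball x (\<rho> x)" using cov' by blast
      have "P q (T x)" using \<rho>T xF' F'F qF qx by (auto simp: dist_commute)
      moreover have "t0 \<le> T x" unfolding t0_def using fin xF' by simp
      ultimately have "P q t0" by (rule Pmono)
      then show "\<forall>s. 0 < s \<longrightarrow> s \<le> t0 \<longrightarrow> ball (q - s *\<^sub>R outer_normal E q) s \<subseteq> E \<and>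
          ball (q + s *\<^sub>R outer_normal E q) s \<inter> closure E = {}" unfolding P_def .
    qed
  qed
qed

lemma C2_open:
  fixes E :: "'a::euclidean_space set"
  assumes reg: "C2_regular E"
  shows "open E"
proof -
  have "x \<in> interior E" if xE: "x \<in> E" for x
  proof (rule ccontr)
    assume "x \<notin> interior E"
    then have xF: "x \<in> frontier E" using xE closure_subset by (auto simp: frontier_def)
    obtain U \<phi> where "local_defining_fun E x U \<phi>" using reg xF unfolding C2_regular_def by blast
    then obtain g g' where L: "ldfd E U \<phi> g g'" and xU: "x \<in> U" by (rule ldf_obtain)
    have "\<phi> x = 0" using ldfd.frontier_phi0[OF L xU xF] .
    moreover have "\<phi> x < 0" using ldfd.EU_iff[OF L xU] xE by simp
    ultimately show False by simp
  qed
  then have "E \<subseteq> interior E" by blast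
  then show ?thesis using interior_subset by (metis interior_open open_interior subset_antisym)
qed

lemma normal_unit:
  fixes E :: "'a::euclidean_space set"
  assumes reg: "C2_regular E" and q: "q \<in> frontier E"
  shows "norm (outer_normal E q) = 1"
proof -
  obtain U \<phi> where "local_defining_fun E q U \<phi>" using reg q unfolding C2_regular_def by blast
  then obtain g g' where L: "ldfd E U \<phi> g g'" and qU: "q \<in> U" by (rule ldf_obtain)
  have "g q \<noteq> 0" using ldfd.g_nz[OF L qU] .
  then show ?thesis using ldfd.outer_normal_eq[OF L qU q] by simp
qed

lemma nearest_normal:
  fixes E :: "'a::euclidean_space set"
  assumes reg: "C2_regular E" and p: "p \<in> frontier E"
    and near: "\<And>q. q \<in> frontier E \<Longrightarrow> dist z p \<le> dist z q"
  shows "z - p = ((z - p) \<bullet> outer_normal E p) *\<^sub>R outer_normal E p"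
proof -
  obtain U \<phi> where "local_defining_fun E p U \<phi>" using reg p unfolding C2_regular_def by blast
  then obtain g g' where L: "ldfd E U \<phi> g g'" and pU: "p \<in> U" by (rule ldf_obtain)
  interpret ldfd E U \<phi> g g' by (rule L)
  define n where "n = outer_normal E p"
  have n_eq: "n = g p /\<^sub>R norm (g p)" using outer_normal_eq[OF pU p] by (simp add: n_def)
  have gp: "g p \<noteq> 0" using g_nz pU by auto
  have nn: "n \<bullet> n = 1" using gp by (simp add: n_eq dot_square_norm)
  define f where "f q = - ((z - q) \<bullet> (z - q))" for q
  have fd: "(f has_derivative (\<lambda>k. 2 * ((z - p) \<bullet> k))) (at p)"
    unfolding f_def
    by (auto intro!: derivative_eq_intros simp: fun_eq_iff inner_diff_right inner_diff_left inner_commute algebra_simps)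
  have mx: "(\<forall>q\<in>frontier E. dist q p < 1 \<longrightarrow> f q \<le> f p) \<or> (\<forall>q\<in>frontier E. dist q p < 1 \<longrightarrow> f p \<le> f q)"
  proof (rule disjI1, intro ballI impI)
    fix q assume "q \<in> frontier E"
    then have "dist z p \<le> dist z q" by (rule near)
    then have "(dist z p)\<^sup>2 \<le> (dist z q)\<^sup>2" by (simp add: power_mono)
    then show "f q \<le> f p" by (simp add: f_def dist_norm dot_square_norm)
  qed
  have "z - p - ((z - p) \<bullet> n) *\<^sub>R n = 0"
  proof (rule orth_zero[OF nn])
    fix \<tau> assume "\<tau> \<bullet> n = 0"
    then have "g p \<bullet> \<tau> = 0" using gp by (simp add: n_eq inner_commute)
    from crit_tangent[OF pU p fd _ mx this] show "(z - p) \<bullet> \<tau> = 0" by simp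
  qed
  then show ?thesis by (simp add: n_def)
qed

lemma near_approach:
  fixes C :: "'a::euclidean_space set"
  assumes C: "closed C" and z: "z \<notin> C" and p: "p \<in> C" and dp: "dist z p = infdist z C"
  shows "p \<in> closure (- C)"
  unfolding closure_approachable
proof (intro allI impI)
  fix e :: real assume e: "e > 0"
  define D where "D = dist z p"
  have D0: "D > 0" using z p by (auto simp: D_def)
  define \<theta> where "\<theta> = min (1 / 2) (e / (2 * D))"
  have th0: "\<theta> > 0" using e D0 by (simp add: \<theta>_def)
  have th1: "\<theta> < 1" by (simp add: \<theta>_def)
  have "\<theta> \<le> e / (2 * D)" by (simp add: \<theta>_def)
  then have thD: "\<theta> * D \<le> e / 2" using D0 by (simp add: le_divide_eq)
  define y where "y = p + \<theta> *\<^sub>R (z - p)"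
  have "dist y p = \<theta> * D" using th0 by (simp add: y_def D_def dist_norm norm_minus_commute)
  then have yp: "dist y p < e" using thD e by linarith
  have "z - y = (1 - \<theta>) *\<^sub>R (z - p)" by (simp add: y_def algebra_simps)
  then have "dist z y = (1 - \<theta>) * D" using th1 by (simp add: dist_norm D_def)
  moreover have "D * \<theta> > 0" using th0 D0 by simp
  ultimately have "dist z y < D" by (simp add: algebra_simps)
  then have "y \<notin> C" using infdist_le[of y C z] dp by (auto simp: D_def)
  then show "\<exists>y\<in>- C. dist y p < e" using yp by blast
qed

lemma tube_diff:
  fixes E :: "'a::euclidean_space set"
  assumes bE: "bounded E" and reg: "C2_regular E" and Fne: "frontier E \<noteq> {}"
  shows "\<exists>r>0. \<forall>z. infdist z (frontier E) < r \<longrightarrow> signed_dist E differentiable (at z)"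
proof -
  obtain t0 where t00: "t0 > 0" and balls: "\<And>q s. q \<in> frontier E \<Longrightarrow> 0 < s \<Longrightarrow> s \<le> t0 \<Longrightarrow>
     ball (q - s *\<^sub>R outer_normal E q) s \<subseteq> E \<and> ball (q + s *\<^sub>R outer_normal E q) s \<inter> closure E = {}"
    using uniform_balls[OF bE reg] by blast
  have oE: "open E" by (rule C2_open[OF reg])
  have F_eq: "frontier E = closure E - E" using oE by (simp add: frontier_def interior_open)
  have bin: "ball (q - t0 *\<^sub>R outer_normal E q) t0 \<subseteq> E" if "q \<in> frontier E" for q
    using balls[OF that t00] by simp
  have bout: "ball (q + t0 *\<^sub>R outer_normal E q) t0 \<inter> closure E = {}" if "q \<in> frontier E" for q
    using balls[OF that t00] by simp
  have closer: False if "infdist z C = D" "w \<in> C" "dist z w < D" for z C D w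
    using infdist_le[OF that(2), of z] that by simp
  have mid: "dist (p + t0 *\<^sub>R n) (p + s *\<^sub>R n) < t0" "dist (p - t0 *\<^sub>R n) (p - s *\<^sub>R n) < t0"
    if "norm n = 1" "0 < s" "s < t0" for p n s
  proof -
    have "dist (p + t0 *\<^sub>R n) (p + s *\<^sub>R n) = norm ((t0 - s) *\<^sub>R n)" by (simp add: dist_norm algebra_simps)
    also have "\<dots> = t0 - s" using that by simp
    finally show "dist (p + t0 *\<^sub>R n) (p + s *\<^sub>R n) < t0" using that by simp
    have "dist (p - t0 *\<^sub>R n) (p - s *\<^sub>R n) = norm ((s - t0) *\<^sub>R n)" by (simp add: dist_norm algebra_simps)
    also have "\<dots> = t0 - s" using that by simp
    finally show "dist (p - t0 *\<^sub>R n) (p - s *\<^sub>R n) < t0" using that by simp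
  qed
  show ?thesis
  proof (intro exI[of _ t0] conjI t00 allI impI)
    fix z assume zr: "infdist z (frontier E) < t0"
    consider "z \<in> frontier E" | "z \<in> E" | "z \<notin> closure E" using F_eq by blast
    then show "signed_dist E differentiable (at z)"
    proof cases
      case 1
      have "(signed_dist E has_derivative (\<lambda>k. outer_normal E z \<bullet> k)) (at z)"
      proof (rule GT0[OF normal_unit[OF reg 1] t00 bin[OF 1]])
        show "ball (z + t0 *\<^sub>R outer_normal E z) t0 \<inter> E = {}" using bout[OF 1] closure_subset by blast
      qed
      then show ?thesis by (rule differentiableI)
    next
      case 2
      define C where "C = - E"
      have cC: "closed C" using oE by (simp add: C_def closed_Compl)
      have FC: "frontier E \<subseteq> C" using F_eq by (auto simp: C_def)
      have Cne: "C \<noteq> {}" using FC Fne by blast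
      have zC: "z \<notin> C" using 2 by (simp add: C_def)
      obtain p where pC: "p \<in> C" and dp: "infdist z C = dist z p" using infdist_attains_inf[OF cC Cne] by blast
      define D where "D = infdist z C"
      have D0: "D > 0" using infdist_pos_not_in_closed[OF cC Cne zC] by (simp add: D_def)
      have "D \<le> infdist z (frontier E)" unfolding D_def by (rule infdist_mono[OF FC Fne])
      then have Dt: "D < t0" using zr by simp
      have "p \<in> closure (- C)" by (rule near_approach[OF cC zC pC dp[symmetric]])
      moreover have "p \<in> closure (- E)" using pC closure_subset[of "- E"] by (auto simp: C_def)
      ultimately have pF: "p \<in> frontier E" by (simp add: frontier_closures C_def)
      have near: "dist z p \<le> dist z q" if "q \<in> frontier E" for q
        using infdist_le[of q C z] FC that dp by auto
      define n where "n = outer_normal E p"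
      have n1: "norm n = 1" using normal_unit[OF reg pF] by (simp add: n_def)
      define lam where "lam = (z - p) \<bullet> n"
      have zp: "z - p = lam *\<^sub>R n" using nearest_normal[OF reg pF near] by (simp add: lam_def n_def)
      have la: "\<bar>lam\<bar> = D" using zp n1 dp by (simp add: D_def dist_norm)
      have "lam < 0"
      proof (rule ccontr)
        assume "\<not> lam < 0"
        then have lD: "lam = D" using la by simp
        define s where "s = min D t0 / 2"
        have s0: "0 < s" "s < D" "s < t0" using D0 t00 by (auto simp: s_def)
        define w where "w = p + s *\<^sub>R n"
        have "w \<in> ball (p + t0 *\<^sub>R n) t0" using mid(1)[OF n1 s0(1) s0(3)] by (simp add: w_def)
        then have "w \<notin> closure E" using bout[OF pF] by (auto simp: n_def)
        then have wC: "w \<in> C" using closure_subset by (auto simp: C_def)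
        have "z - w = (D - s) *\<^sub>R n" using zp lD by (simp add: w_def algebra_simps)
        then have "dist z w = D - s" using n1 s0 by (simp add: dist_norm)
        then show False using closer[OF _ wC, of z D] s0 by (simp add: D_def)
      qed
      then have lD: "lam = - D" using la by simp
      have GTr: "((\<lambda>y. infdist y C) has_derivative (\<lambda>k. (- n) \<bullet> k)) (at z)"
      proof (rule GT[OF pC _ _ D0 Dt])
        show "z - p = D *\<^sub>R (- n)" using zp lD by simp
        show "norm (- n) = 1" using n1 by simp
        show "ball (p + t0 *\<^sub>R (- n)) t0 \<inter> C = {}" using bin[OF pF] by (auto simp: C_def n_def)
        show "infdist z C = D" by (simp add: D_def)
      qed
      have "((\<lambda>y. - infdist y C) has_derivative (\<lambda>k. - ((- n) \<bullet> k))) (at z)"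
        using has_derivative_minus[OF GTr] .
      then have "(signed_dist E has_derivative (\<lambda>k. - ((- n) \<bullet> k))) (at z)"
        by (rule has_derivative_transform_within_open[OF _ oE 2]) (simp add: signed_dist_def C_def)
      then show ?thesis by (rule differentiableI)
    next
      case 3
      define C where "C = closure E"
      have cC: "closed C" by (simp add: C_def)
      have FC: "frontier E \<subseteq> C" using F_eq by (auto simp: C_def)
      have Cne: "C \<noteq> {}" using FC Fne by blast
      have zC: "z \<notin> C" using 3 by (simp add: C_def)
      obtain p where pC: "p \<in> C" and dp: "infdist z C = dist z p" using infdist_attains_inf[OF cC Cne] by blast
      define D where "D = infdist z C"
      have D0: "D > 0" using infdist_pos_not_in_closed[OF cC Cne zC] by (simp add: D_def)
      have "D \<le> infdist z (frontier E)" unfolding D_def by (rule infdist_mono[OF FC Fne])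
      then have Dt: "D < t0" using zr by simp
      have "p \<in> closure (- C)" by (rule near_approach[OF cC zC pC dp[symmetric]])
      moreover have "closure (- C) \<subseteq> closure (- E)" using closure_subset by (auto simp: C_def intro!: closure_mono)
      ultimately have pF: "p \<in> frontier E" using pC by (auto simp: frontier_closures C_def)
      have near: "dist z p \<le> dist z q" if "q \<in> frontier E" for q
        using infdist_le[of q C z] FC that dp by auto
      define n where "n = outer_normal E p"
      have n1: "norm n = 1" using normal_unit[OF reg pF] by (simp add: n_def)
      define lam where "lam = (z - p) \<bullet> n"
      have zp: "z - p = lam *\<^sub>R n" using nearest_normal[OF reg pF near] by (simp add: lam_def n_def)
      have la: "\<bar>lam\<bar> = D" using zp n1 dp by (simp add: D_def dist_norm)
      have "lam > 0"
      proof (rule ccontr)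
        assume "\<not> lam > 0"
        then have lD: "lam = - D" using la by simp
        define s where "s = min D t0 / 2"
        have s0: "0 < s" "s < D" "s < t0" using D0 t00 by (auto simp: s_def)
        define w where "w = p - s *\<^sub>R n"
        have "w \<in> ball (p - t0 *\<^sub>R n) t0" using mid(2)[OF n1 s0(1) s0(3)] by (simp add: w_def)
        then have "w \<in> E" using bin[OF pF] by (auto simp: n_def)
        then have wC: "w \<in> C" using closure_subset by (auto simp: C_def)
        have "z - w = (s - D) *\<^sub>R n" using zp lD by (simp add: w_def algebra_simps)
        then have "dist z w = D - s" using n1 s0 by (simp add: dist_norm)
        then show False using closer[OF _ wC, of z D] s0 by (simp add: D_def)
      qed
      then have lD: "lam = D" using la by simp
      have GTr: "((\<lambda>y. infdist y C) has_derivative (\<lambda>k. n \<bullet> k)) (at z)"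
      proof (rule GT[OF pC _ n1 D0 Dt])
        show "z - p = D *\<^sub>R n" using zp lD by simp
        show "ball (p + t0 *\<^sub>R n) t0 \<inter> C = {}" using bout[OF pF] by (simp add: C_def n_def)
        show "infdist z C = D" by (simp add: D_def)
      qed
      have oC: "open (- closure E)" by (simp add: open_Compl)
      have "(signed_dist E has_derivative (\<lambda>k. n \<bullet> k)) (at z)"
      proof (rule has_derivative_transform_within_open[OF GTr oC])
        show "z \<in> - closure E" using 3 by simp
        fix y assume "y \<in> - closure E"
        then have "y \<in> - E" using closure_subset by auto
        then show "infdist y C = signed_dist E y"
          by (simp add: signed_dist_def C_def infdist_closure_eq)
      qed
      then show ?thesis by (rule differentiableI)
    qed
  qed
qed

lemma inner_fun_eq: "(\<lambda>k. a \<bullet> k) = (\<lambda>k. b \<bullet> k) \<Longrightarrow> a = (b::'a::real_inner)"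
proof -
  assume h: "(\<lambda>k. a \<bullet> k) = (\<lambda>k. b \<bullet> k)"
  then have "a \<bullet> (a - b) = b \<bullet> (a - b)" by metis
  then have "(a - b) \<bullet> (a - b) = 0" by (simp add: inner_diff_left inner_diff_right inner_commute)
  then show ?thesis by simp
qed

lemma reach_lemma:
  fixes C :: "'a::euclidean_space set"
  assumes cC: "closed C" and x: "x \<in> C" and u1: "norm u = 1" and l0: "ell > 0"
    and y: "x + ell *\<^sub>R u \<in> C" and r: "r > ell"
    and ib: "\<exists>t0>0. \<forall>t. 0 < t \<longrightarrow> t \<le> t0 \<longrightarrow> ball (x + t *\<^sub>R u) t \<inter> C = {}"
    and diff: "\<And>w. w \<notin> C \<Longrightarrow> dist w x < r \<Longrightarrow> (\<lambda>y. infdist y C) differentiable (at w)"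
  shows False
proof -
  define D where "D y = infdist y C" for y
  define z where "z t = x + t *\<^sub>R u" for t
  have Cne: "C \<noteq> {}" using x by auto
  have contD: "continuous_on UNIV D" unfolding D_def by (intro continuous_intros)
  have contz: "continuous_on UNIV (\<lambda>t. D (z t))"
    unfolding D_def z_def by (intro continuous_intros)
  have distz: "dist (z t) x = \<bar>t\<bar>" for t using u1 by (simp add: z_def dist_norm)
  have Dle: "D (z t) \<le> \<bar>t\<bar>" for t using infdist_le[OF x, of "z t"] distz by (simp add: D_def)
  have Dle2: "D (z t) \<le> \<bar>ell - t\<bar>" for t
  proof -
    have "dist (z t) (x + ell *\<^sub>R u) = norm ((t - ell) *\<^sub>R u)" by (simp add: z_def dist_norm algebra_simps)
    then have "dist (z t) (x + ell *\<^sub>R u) = \<bar>ell - t\<bar>" using u1 by simp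
    then show ?thesis using infdist_le[OF y, of "z t"] by (simp add: D_def)
  qed
  have grad: "\<exists>D'. (D has_derivative D') (at w)" if "w \<notin> C" "dist w x < r" for w
    using diff[OF that] unfolding D_def differentiable_def by blast
  have touch: "D' = (\<lambda>k. ((w - p) /\<^sub>R norm (w - p)) \<bullet> k)"
    if "(D has_derivative D') (at w)" "p \<in> C" "dist w p = D w" "w \<notin> C" for w p D'
  proof (rule touching)
    show "((\<lambda>y. infdist y C) has_derivative D') (at w)" using that(1) by (simp add: D_def[abs_def])
    show "w \<noteq> p" using that by auto
  qed (use that in \<open>auto simp: D_def\<close>)
  have uniq: "p = q" if hyp: "w \<notin> C" "dist w x < r" "p \<in> C" "q \<in> C" "dist w p = D w" "dist w q = D w" for w p q
  proof -
    obtain D' where D': "(D has_derivative D') (at w)" using grad[OF hyp(1,2)] by blast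
    have "(\<lambda>k. ((w - p) /\<^sub>R norm (w - p)) \<bullet> k) = (\<lambda>k. ((w - q) /\<^sub>R norm (w - q)) \<bullet> k)"
      using touch[OF D' hyp(3,5,1)] touch[OF D' hyp(4,6,1)] by simp
    then have e: "(w - p) /\<^sub>R norm (w - p) = (w - q) /\<^sub>R norm (w - q)" by (rule inner_fun_eq)
    have "norm (w - p) = norm (w - q)" using hyp(5,6) by (simp add: dist_norm)
    moreover have "norm (w - p) \<noteq> 0" using hyp(1,3) by auto
    ultimately have "w - p = w - q" using e by simp
    then show ?thesis by simp
  qed
  define A where "A = {t \<in> {0..ell}. t \<le> D (z t)}"
  have clA: "closed A"
  proof -
    have "closed {t. t \<le> D (z t)}" by (rule closed_Collect_le[OF continuous_on_id contz])
    then have "closed ({0..ell} \<inter> {t. t \<le> D (z t)})" by (intro closed_Int) auto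
    moreover have "A = {0..ell} \<inter> {t. t \<le> D (z t)}" by (auto simp: A_def)
    ultimately show ?thesis by simp
  qed
  have A0: "0 \<in> A" using l0 by (simp add: A_def D_def infdist_nonneg)
  have bdA: "bdd_above A" by (rule bdd_aboveI[of _ ell]) (auto simp: A_def)
  define T where "T = Sup A"
  have TA: "T \<in> A" unfolding T_def using closed_contains_Sup[OF _ bdA clA] A0 by blast
  have geT: "t \<le> T" if "t \<in> A" for t unfolding T_def using cSup_upper[OF that bdA] .
  obtain t0 where t00: "t0 > 0" and t0: "\<And>t. 0 < t \<Longrightarrow> t \<le> t0 \<Longrightarrow> ball (x + t *\<^sub>R u) t \<inter> C = {}"
    using ib by blast
  define t1 where "t1 = min t0 ell"
  have t10: "t1 > 0" using t00 l0 by (simp add: t1_def)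
  have "t1 \<le> D (z t1)" unfolding D_def
  proof (rule infdist_geI[OF Cne])
    fix a assume "a \<in> C"
    then have "a \<notin> ball (x + t1 *\<^sub>R u) t1" using t0[OF t10] by (auto simp: t1_def)
    then show "t1 \<le> dist (z t1) a" by (simp add: z_def)
  qed
  then have "t1 \<in> A" using t10 by (auto simp: A_def t1_def)
  then have T0: "T > 0" using geT t10 by force
  have DT: "D (z T) = T" using TA Dle[of T] T0 by (auto simp: A_def)
  have Tl: "T \<le> ell / 2" using TA Dle2[of T] by (auto simp: A_def)
  have zTC: "z T \<notin> C" using DT T0 by (auto simp: D_def)
  have zTr: "dist (z T) x < r" using distz[of T] T0 Tl r l0 by simp
  have nearx: "dist (z T) x = D (z T)" using distz[of T] T0 DT by simp
  have Tlt: "T < ell / 2"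
  proof (rule ccontr)
    assume "\<not> T < ell / 2"
    then have "T = ell / 2" using Tl by simp
    moreover have "dist (z T) (x + ell *\<^sub>R u) = \<bar>ell - T\<bar>"
    proof -
      have "dist (z T) (x + ell *\<^sub>R u) = norm ((T - ell) *\<^sub>R u)" by (simp add: z_def dist_norm algebra_simps)
      then show ?thesis using u1 by simp
    qed
    ultimately have "dist (z T) (x + ell *\<^sub>R u) = D (z T)" using DT T0 by simp
    then have "x + ell *\<^sub>R u = x" using uniq[OF zTC zTr y x _ nearx] by simp
    then show False using l0 u1 by simp
  qed
  define h where "h = min (T / 2) (ell / 2 - T)"
  have h0: "h > 0" using T0 Tlt by (simp add: h_def)
  have "h \<le> T / 2" unfolding h_def by (rule min.cobounded1)
  then have hT: "h < T" using T0 by simp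
  have "h \<le> ell / 2 - T" unfolding h_def by (rule min.cobounded2)
  then have Th: "T + h \<le> ell / 2" by simp
  define K where "K = cball (z T) h"
  have "continuous_on K D" using contD by (rule continuous_on_subset) simp
  moreover have "compact K" "K \<noteq> {}" using h0 by (auto simp: K_def)
  ultimately obtain w where wK: "w \<in> K" and wmax: "\<And>y. y \<in> K \<Longrightarrow> D y \<le> D w"
    using continuous_attains_sup[of K D] by blast
  have DwT: "D w \<ge> T" using wmax[of "z T"] h0 DT by (simp add: K_def)
  have wC: "w \<notin> C" using DwT T0 by (auto simp: D_def)
  have wr: "dist w x < r"
  proof -
    have "dist w x \<le> dist w (z T) + dist (z T) x" by (rule dist_triangle)
    also have "\<dots> \<le> h + T" using wK distz[of T] T0 by (simp add: K_def dist_commute)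
    finally show ?thesis using Th r l0 by simp
  qed
  obtain Dw' where Dw': "(D has_derivative Dw') (at w)" using grad[OF wC wr] by blast
  obtain p where pC: "p \<in> C" and dwp: "infdist w C = dist w p" using infdist_attains_inf[OF cC Cne] by blast
  have dwp': "dist w p = D w" using dwp by (simp add: D_def)
  define e where "e = (w - p) /\<^sub>R norm (w - p)"
  have wp: "w \<noteq> p" using wC pC by auto
  have e1: "norm e = 1" using wp by (simp add: e_def)
  have Dw'e: "Dw' = (\<lambda>k. e \<bullet> k)" using touch[OF Dw' pC dwp' wC] by (simp add: e_def)
  define a where "a = w - z T"
  have na: "norm a \<le> h" using wK by (simp add: K_def a_def dist_norm norm_minus_commute)
  have na_eq: "norm a = h"
  proof (rule ccontr)
    assume "norm a \<noteq> h"
    then have "norm a < h" using na by simp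
    then have "dist w (z T) < h" by (simp add: a_def dist_norm)
    then have hd: "h - dist w (z T) > 0" by simp
    have loc: "D y \<le> D w" if "dist y w < h - dist w (z T)" for y
    proof -
      have "dist (z T) y \<le> dist (z T) w + dist w y" by (rule dist_triangle)
      then have "y \<in> K" using that by (simp add: K_def dist_commute)
      then show "D y \<le> D w" by (rule wmax)
    qed
    have "\<forall>\<^sub>F y in at w. D y \<le> D w"
      unfolding eventually_at using hd loc by blast
    then have "Dw' = (\<lambda>h. 0)" using has_derivative_local_max[OF Dw'] by simp
    then have "e \<bullet> e = 0" using Dw'e by metis
    then show False using e1 by simp
  qed
  have cone: "e \<bullet> k \<le> 0" if ka: "k \<bullet> a < 0" for k
  proof (rule ccontr)
    assume "\<not> e \<bullet> k \<le> 0"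
    then have ek: "e \<bullet> k > 0" by simp
    have "((\<lambda>r. w + r *\<^sub>R k) has_derivative (\<lambda>r. r *\<^sub>R k)) (at 0)"
      by (intro derivative_eq_intros) auto
    then have "((\<lambda>r. D (w + r *\<^sub>R k)) has_derivative (\<lambda>s. Dw' (s *\<^sub>R k))) (at 0)"
      by (rule has_derivative_compose, simp add: Dw')
    then have der: "((\<lambda>r. D (w + r *\<^sub>R k)) has_real_derivative (e \<bullet> k)) (at 0)"
      unfolding has_field_derivative_def by (rule has_derivative_eq_rhs) (auto simp: fun_eq_iff Dw'e)
    obtain d where d0: "d > 0" and d: "\<forall>s>0. s < d \<longrightarrow> D (w + 0 *\<^sub>R k) < D (w + (0 + s) *\<^sub>R k)"
      using DERIV_pos_inc_right[OF der ek] by blast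
    have k0: "k \<noteq> 0" using ka by auto
    define s where "s = min (d / 2) (- (k \<bullet> a) / (k \<bullet> k))"
    have kk: "k \<bullet> k > 0" using k0 by simp
    have "(k \<bullet> a) / (k \<bullet> k) < 0" by (rule divide_neg_pos[OF ka kk])
    then have "- (k \<bullet> a) / (k \<bullet> k) > 0" by simp
    then have s0: "s > 0" using d0 by (simp add: s_def)
    have sd: "s < d" using d0 by (simp add: s_def)
    have "s \<le> - (k \<bullet> a) / (k \<bullet> k)" by (simp add: s_def)
    then have ss: "s * (k \<bullet> k) \<le> - (k \<bullet> a)" by (simp only: pos_le_divide_eq[OF kk])
    have "(a + s *\<^sub>R k) \<bullet> (a + s *\<^sub>R k) = a \<bullet> a + s * (2 * (k \<bullet> a) + s * (k \<bullet> k))"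
      by (simp add: inner_add_left inner_add_right inner_commute algebra_simps)
    also have "\<dots> < a \<bullet> a"
    proof -
      have "2 * (k \<bullet> a) + s * (k \<bullet> k) < 0" using ss ka by linarith
      then show ?thesis using s0 by (simp add: mult_pos_neg)
    qed
    finally have "norm (a + s *\<^sub>R k) < norm a" by (simp add: norm_eq_sqrt_inner)
    then have "w + s *\<^sub>R k \<in> K" using na by (simp add: K_def a_def dist_norm norm_minus_commute algebra_simps)
    then have "D (w + s *\<^sub>R k) \<le> D w" by (rule wmax)
    moreover have "D w < D (w + s *\<^sub>R k)" using d s0 sd by simp
    ultimately show False by simp
  qed
  have ea: "e \<bullet> a = h"
  proof (rule ccontr)
    assume "e \<bullet> a \<noteq> h"
    moreover have "e \<bullet> a \<le> h" using Cauchy_Schwarz_ineq2[of e a] e1 na_eq by simp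
    ultimately have lt: "e \<bullet> a < h" by simp
    define k where "k = e - a /\<^sub>R h"
    have "k \<bullet> a = e \<bullet> a - h" using h0 na_eq by (simp add: k_def inner_diff_left dot_square_norm power2_eq_square)
    then have "k \<bullet> a < 0" using lt by simp
    then have "e \<bullet> k \<le> 0" by (rule cone)
    moreover have "e \<bullet> k = 1 - (e \<bullet> a) / h" using e1 by (simp add: k_def inner_diff_right dot_square_norm divide_inverse mult.commute)
    ultimately have "1 \<le> (e \<bullet> a) / h" by simp
    then have "h \<le> e \<bullet> a" using h0 by (simp add: le_divide_eq)
    then show False using lt by simp
  qed
  have a_eq: "a = h *\<^sub>R e"
  proof -
    have "(a - h *\<^sub>R e) \<bullet> (a - h *\<^sub>R e) = a \<bullet> a - 2 * h * (e \<bullet> a) + h * h * (e \<bullet> e)"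
      by (simp add: inner_diff_left inner_diff_right inner_commute algebra_simps)
    also have "\<dots> = 0" using ea na_eq e1 by (simp add: dot_square_norm power2_eq_square)
    finally show ?thesis by simp
  qed
  have DwT': "D w > h" using DwT hT by simp
  have "D w \<noteq> 0" using DwT T0 by simp
  then have wp_eq: "w - p = D w *\<^sub>R e" using wp dwp' by (simp add: e_def dist_norm)
  have zTp: "z T - p = (D w - h) *\<^sub>R e" using a_eq wp_eq by (simp add: a_def algebra_simps)
  have dzp: "dist (z T) p = D w - h" using zTp e1 DwT' by (simp add: dist_norm)
  have "D w \<le> D (z T) + dist w (z T)" unfolding D_def by (rule infdist_triangle)
  moreover have "dist w (z T) = h" using na_eq by (simp add: a_def dist_norm)
  ultimately have "D (z T) \<ge> D w - h" by simp
  moreover have "D (z T) \<le> dist (z T) p" using infdist_le[OF pC] by (simp add: D_def)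
  ultimately have dzp': "dist (z T) p = D (z T)" using dzp by simp
  have px: "p = x" using uniq[OF zTC zTr pC x dzp' nearx] .
  have DwTh: "D w = T + h" using dzp dzp' DT by simp
  have "z T - x = T *\<^sub>R u" by (simp add: z_def)
  then have "T *\<^sub>R u = T *\<^sub>R e" using zTp px DwTh by simp
  then have eu: "e = u" using T0 by simp
  have "w = z (T + h)" using a_eq eu by (simp add: a_def z_def algebra_simps)
  then have "T + h \<le> D (z (T + h))" using DwTh by simp
  then have "T + h \<in> A" using T0 h0 Th l0 by (auto simp: A_def)
  then have "T + h \<le> T" by (rule geT)
  then show False using h0 by simp
qed

lemma tan_proj_lin: "linear (tan_proj E x)"
  unfolding tan_proj_def
  by (rule linearI) (simp_all add: inner_add_left algebra_simps)

lemma claim3: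
  fixes E :: "'a::euclidean_space set"
  assumes bE: "bounded E" and reg: "C2_regular E" and eps: "\<epsilon> > 0"
    and ext: "local_max_on (S_fun E \<epsilon>) (frontier E) x y \<or> local_min_on (S_fun E \<epsilon>) (frontier E) x y"
    and rE: "r_E E > sqrt \<epsilon>"
  shows "outer_normal E y =
           (outer_normal E x - (2 * S_fun E \<epsilon> x y) *\<^sub>R (x - y)) /\<^sub>R
           ((outer_normal E x - (2 * S_fun E \<epsilon> x y) *\<^sub>R (x - y)) \<bullet> outer_normal E y)"
proof -
  obtain r0 where xF: "x \<in> frontier E" and yF: "y \<in> frontier E"
    using ext_unfold[OF ext] by blast
  define s0 where "s0 = S_fun E \<epsilon> x y"
  define nx where "nx = outer_normal E x"
  define ny where "ny = outer_normal E y"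
  define w where "w = nx - (2 * s0) *\<^sub>R (x - y)"
  have c2: "tan_proj E y nx = (2 * s0) *\<^sub>R tan_proj E y (x - y)"
    using claim2[OF reg eps ext] by (simp add: nx_def s0_def)
  have "tan_proj E y w = tan_proj E y nx - (2 * s0) *\<^sub>R tan_proj E y (x - y)"
    unfolding w_def by (simp add: linear_diff[OF tan_proj_lin[of E y]] linear_scale[OF tan_proj_lin[of E y]])
  then have "tan_proj E y w = 0" using c2 by simp
  then have wny: "w = (w \<bullet> ny) *\<^sub>R ny" by (simp add: tan_proj_def ny_def)
  have ny1: "norm ny = 1" using normal_unit[OF reg yF] by (simp add: ny_def)
  have nx1: "norm nx = 1" using normal_unit[OF reg xF] by (simp add: nx_def)
  have "w \<bullet> ny \<noteq> 0"
  proof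
    assume w0': "w \<bullet> ny = 0"
    then have w0: "w = 0" using wny by simp
    then have nxe: "nx = (2 * s0) *\<^sub>R (x - y)" by (simp add: w_def)
    have self: "(x - y) \<bullet> nx - s0 * ((x - y) \<bullet> (x - y) + \<epsilon>) = 0"
      using S_self[OF eps, of x y E] by (simp add: nx_def s0_def)
    have s0ne: "s0 \<noteq> 0" using nxe nx1 by auto
    have "(x - y) \<bullet> nx = 2 * s0 * ((x - y) \<bullet> (x - y))" using nxe by simp
    then have "s0 * (\<epsilon> - (x - y) \<bullet> (x - y)) = 0" using self by (simp add: algebra_simps)
    then have "(x - y) \<bullet> (x - y) = \<epsilon>" using s0ne by simp
    then have xy2: "(norm (x - y))\<^sup>2 = \<epsilon>" by (simp add: dot_square_norm)
    define ell where "ell = norm (x - y)"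
    have ell_eq: "ell = sqrt \<epsilon>" using xy2 by (simp add: ell_def real_sqrt_unique)
    have ell0: "ell > 0" using eps ell_eq by simp
    have "1 = norm nx" using nx1 by simp
    also have "\<dots> = 2 * \<bar>s0\<bar> * ell" using nxe by (simp add: ell_def abs_mult)
    finally have s0ell: "2 * \<bar>s0\<bar> * ell = 1" by simp
    define R where "R = {r. r > 0 \<and> (\<forall>z. infdist z (frontier E) < r \<longrightarrow> signed_dist E differentiable (at z))}"
    have Fne: "frontier E \<noteq> {}" using xF by auto
    obtain rt where "rt \<in> R" using tube_diff[OF bE reg Fne] by (auto simp: R_def)
    then have Rne: "R \<noteq> {}" by auto
    have rE_eq: "r_E E = Sup R" by (simp add: r_E_def R_def)
    obtain r where rR: "r \<in> R" and rl: "r > ell"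
    proof (cases "bdd_above R")
      case True
      then show ?thesis using that rE rE_eq less_cSup_iff[OF Rne True] ell_eq by auto
    next
      case False
      then show ?thesis using that unfolding bdd_above_def by (meson not_le_imp_less)
    qed
    have rdiff: "signed_dist E differentiable (at z)" if "dist z x < r" for z
    proof -
      have "infdist z (frontier E) \<le> dist z x" by (rule infdist_le[OF xF])
      then show ?thesis using rR that by (auto simp: R_def)
    qed
    have oE: "open E" by (rule C2_open[OF reg])
    have F_eq: "frontier E = closure E - E" using oE by (simp add: frontier_def interior_open)
    obtain t0 where t00: "t0 > 0" and balls: "\<And>q s. q \<in> frontier E \<Longrightarrow> 0 < s \<Longrightarrow> s \<le> t0 \<Longrightarrow>
       ball (q - s *\<^sub>R outer_normal E q) s \<subseteq> E \<and> ball (q + s *\<^sub>R outer_normal E q) s \<inter> closure E = {}"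
      using uniform_balls[OF bE reg] by blast
    show False
    proof (cases "s0 > 0")
      case True
      have yeq: "y = x + ell *\<^sub>R (- nx)"
      proof -
        have "x - y = (1 / (2 * s0)) *\<^sub>R nx" using nxe True by simp
        moreover have "1 / (2 * s0) = ell" using s0ell True by (simp add: field_simps)
        ultimately show ?thesis by (simp add: algebra_simps)
      qed
      show False
      proof (rule reach_lemma[where C="- E" and x=x and u="- nx" and ell=ell and r=r])
        show "closed (- E)" using oE by (simp add: closed_Compl)
        show "x \<in> - E" using xF F_eq by auto
        show "norm (- nx) = 1" using nx1 by simp
        show "ell > 0" by (rule ell0)
        show "x + ell *\<^sub>R (- nx) \<in> - E" using yF F_eq yeq by auto
        show "r > ell" by (rule rl)
        show "\<exists>t0>0. \<forall>t. 0 < t \<longrightarrow> t \<le> t0 \<longrightarrow> ball (x + t *\<^sub>R (- nx)) t \<inter> - E = {}"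
          using balls[OF xF] t00 by (intro exI[of _ t0]) (auto simp: nx_def)
        fix z assume zC: "z \<notin> - E" and zx: "dist z x < r"
        obtain d' where "(signed_dist E has_derivative d') (at z)"
          using rdiff[OF zx] unfolding differentiable_def by blast
        then have "((\<lambda>y. - signed_dist E y) has_derivative (\<lambda>k. - d' k)) (at z)"
          by (rule has_derivative_minus)
        then have "((\<lambda>y. infdist y (- E)) has_derivative (\<lambda>k. - d' k)) (at z)"
          by (rule has_derivative_transform_within_open[OF _ oE]) (use zC in \<open>auto simp: signed_dist_def\<close>)
        then show "(\<lambda>y. infdist y (- E)) differentiable (at z)" by (rule differentiableI)
      qed
    next
      case False
      then have sneg: "s0 < 0" using s0ne by simp
      have yeq: "y = x + ell *\<^sub>R nx"
      proof -
        have "x - y = (1 / (2 * s0)) *\<^sub>R nx" using nxe s0ne by simp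
        moreover have "1 / (2 * s0) = - ell" using s0ell sneg by (simp add: field_simps)
        ultimately show ?thesis by (simp add: algebra_simps)
      qed
      show False
      proof (rule reach_lemma[where C="closure E" and x=x and u="nx" and ell=ell and r=r])
        show "closed (closure E)" by simp
        show "x \<in> closure E" using xF F_eq by auto
        show "norm nx = 1" by (rule nx1)
        show "ell > 0" by (rule ell0)
        show "x + ell *\<^sub>R nx \<in> closure E" using yF F_eq yeq by auto
        show "r > ell" by (rule rl)
        show "\<exists>t0>0. \<forall>t. 0 < t \<longrightarrow> t \<le> t0 \<longrightarrow> ball (x + t *\<^sub>R nx) t \<inter> closure E = {}"
          using balls[OF xF] t00 by (intro exI[of _ t0]) (auto simp: nx_def)
        fix z assume zC: "z \<notin> closure E" and zx: "dist z x < r"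
        obtain d' where "(signed_dist E has_derivative d') (at z)"
          using rdiff[OF zx] unfolding differentiable_def by blast
        then have "((\<lambda>y. infdist y (closure E)) has_derivative d') (at z)"
        proof (rule has_derivative_transform_within_open[where s="- closure E"])
          show "open (- closure E)" by (simp add: open_Compl)
          show "z \<in> - closure E" using zC by simp
          fix v assume "v \<in> - closure E"
          then have "v \<in> - E" using closure_subset by auto
          then show "signed_dist E v = infdist v (closure E)"
            by (simp add: signed_dist_def infdist_closure_eq)
        qed
        then show "(\<lambda>y. infdist y (closure E)) differentiable (at z)" by (rule differentiableI)
      qed
    qed
  qed
  then have "ny = w /\<^sub>R (w \<bullet> ny)"
  proof -
    assume ne: "w \<bullet> ny \<noteq> 0"
    have "w /\<^sub>R (w \<bullet> ny) = ((w \<bullet> ny) / (w \<bullet> ny)) *\<^sub>R ny" using wny by (metis scaleR_scaleR divide_inverse_commute mult.commute)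
    then show ?thesis using ne by simp
  qed
  then show ?thesis by (simp add: ny_def w_def nx_def s0_def)
qed

theorem lemma4p2:
  fixes E :: "'a::euclidean_space set" and \<epsilon> :: real and x y :: 'a
  assumes "DIM('a) \<ge> 2"
    and "bounded E" and "C2_regular E" and "\<epsilon> > 0"
    and "local_max_on (S_fun E \<epsilon>) (frontier E) x y \<or> local_min_on (S_fun E \<epsilon>) (frontier E) x y"
  shows "second_fund E x (x - y) = (2 * S_fun E \<epsilon> x y) *\<^sub>R tan_proj E x (x - y)
       \<and> tan_proj E y (outer_normal E x) = (2 * S_fun E \<epsilon> x y) *\<^sub>R tan_proj E y (x - y)
       \<and> (r_E E > sqrt \<epsilon> \<longrightarrow>
         outer_normal E y =
           (outer_normal E x - (2 * S_fun E \<epsilon> x y) *\<^sub>R (x - y)) /\<^sub>R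
           ((outer_normal E x - (2 * S_fun E \<epsilon> x y) *\<^sub>R (x - y)) \<bullet> outer_normal E y))"
  using claim1[OF assms(3,4,5)] claim2[OF assms(3,4,5)] claim3[OF assms(2,3,4,5)] by blast


end
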